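(* Let $\Omega\subset\mathbb{R}^N$ be a bounded domain of $\mathrm{C}^2$-regular class, $p>\max\{1,\frac{2N}{N+2}\}$, $q\ge2$, $\lambda,\kappa>0$, $\alpha\in\mathbb{R}$ with $|\alpha|\le\lambda/2$, $T>0$, $F\in\mathrm{L}^2(0,T;\mathbb{L}^2(\Omega))$, $B:\mathbb{L}^2(\Omega)\to\mathbb{L}^2(\Omega)$ Lipschitz with constant $L_B$, $U_0\in\mathbb{W}^{1,p}_0(\Omega)\cap\mathbb{L}^q(\Omega)$, and $\nu>0$. Let $U$ be a solution of $$\frac{dU}{dt}(t)+\partial(\lambda\varphi+\kappa\psi)(U(t))+\alpha I\partial\varphi_\nu(U(t))+B(U(t))=F(t),\ t\in(0,T),\qquad U(0)=U_0.$$ Then there exists a constant $C_1>0$ depending only on $\lambda,\kappa,L_B,T,|B(0)|_{\mathbb{L}^2},|U_0|_{\mathbb{L}^2}$ and $\int_0^T|F|_{\mathbb{L}^2}^2dt$ such that $\sup_{t\in[0,T]}|U(t)|_{\mathbb{L}^2}^2\le C_1$.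
   Context: Functions $U=(u_1,u_2)^{\mathrm T}$ are real $\mathbb{R}^2$-valued; $\mathbb{L}^r(\Omega)=\mathrm{L}^r(\Omega)^2$, $\mathbb{W}^{1,p}_0(\Omega)=\mathrm{W}^{1,p}_0(\Omega)^2$, $(U,V)_{\mathbb{L}^2}=\int_\Omega(u_1v_1+u_2v_2)dx$; $I(u_1,u_2)^{\mathrm T}=(-u_2,u_1)^{\mathrm T}$; $|\nabla U|=(|\nabla u_1|^2+|\nabla u_2|^2)^{1/2}$. On $\mathbb{L}^2(\Omega)$: $\varphi(U)=\frac1p\int_\Omega|\nabla U|^p$ if $U\in\mathbb{W}^{1,p}_0\cap\mathbb{L}^2$, $+\infty$ otherwise; $\psi(U)=\frac1q\int_\Omega|U|^q$ if $U\in\mathbb{L}^q\cap\mathbb{L}^2$, $+\infty$ otherwise; $\partial$ denotes the $\mathbb{L}^2$-subdifferential ($\partial\varphi(U)=-\mathrm{div}(|\nabla U|^{p-2}\nabla U)$, $\partial\psi(U)=|U|^{q-2}U$). The Yosida approximation is $\partial\varphi_\nu(U)=\frac1\nu(U-(1+\nu\partial\varphi)^{-1}U)$. A solution means $U\in\mathrm{W}^{1,2}(0,T;\mathbb{L}^2(\Omega))$ with $U(0)=U_0$, $U(t)\in\mathrm{D}(\partial\varphi)\cap\mathrm{D}(\partial\psi)$ and the equation holding for a.e. $t$, and $\partial\varphi(U),\partial\psi(U)\in\mathrm{L}^2(0,T;\mathbb{L}^2(\Omega))$. *)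

theory Defs
  imports "HOL-Analysis.Analysis"
begin

text \<open>Points of \<open>\<Omega>\<close> live in an arbitrary Euclidean space \<open>'a\<close>
  (so \<open>N = DIM('a)\<close>). An \<open>\<real>\<^sup>2\<close>-valued function \<open>U = (u1,u2)\<close> is encoded as a
  complex-valued function \<open>x \<mapsto> u1 x + i u2 x\<close>; then \<open>|U| = cmod U\<close>, the
  \<open>\<real>\<^sup>2\<close> inner product is \<open>Re (cnj U * V)\<close> and the rotation \<open>I\<close> is multiplication by \<open>\<i>\<close>.
  The gradient of \<open>U\<close> is a pair of vectors (gradient of \<open>u1\<close>, gradient of \<open>u2\<close>);
  the product norm gives \<open>|\<nabla>U| = sqrt (|\<nabla>u1|^2 + |\<nabla>u2|^2)\<close>.\<close>

definition C2_fun :: "('a::euclidean_space \<Rightarrow> real) \<Rightarrow> bool" where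
  "C2_fun g \<longleftrightarrow> (\<exists>g' g''. (\<forall>x. (g has_derivative g' x) (at x))
      \<and> (\<forall>x v. ((\<lambda>y. g' y v) has_derivative g'' x v) (at x))
      \<and> (\<forall>u v. continuous_on UNIV (\<lambda>x. g'' x u v)))"

definition C2_domain :: "'a::euclidean_space set \<Rightarrow> bool" where
  "C2_domain \<Omega> \<longleftrightarrow> open \<Omega> \<and> connected \<Omega> \<and> \<Omega> \<noteq> {} \<and>
     (\<forall>x0\<in>frontier \<Omega>. \<exists>r>0. \<exists>e g. norm e = 1 \<and> C2_fun g \<and>
        \<Omega> \<inter> ball x0 r = {x\<in>ball x0 r. x \<bullet> e > g (x - (x \<bullet> e) *\<^sub>R e)})"

definition Lr :: "real \<Rightarrow> 'a::euclidean_space set \<Rightarrow> ('a \<Rightarrow> complex) \<Rightarrow> bool" where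
  "Lr r \<Omega> f \<longleftrightarrow> f \<in> borel_measurable (lebesgue_on \<Omega>) \<and>
     (\<integral>\<^sup>+x\<in>\<Omega>. ennreal (cmod (f x) powr r) \<partial>lebesgue) < \<infinity>"

abbreviation L2 :: "'a::euclidean_space set \<Rightarrow> ('a \<Rightarrow> complex) \<Rightarrow> bool" where
  "L2 \<Omega> f \<equiv> Lr 2 \<Omega> f"

definition l2norm :: "'a::euclidean_space set \<Rightarrow> ('a \<Rightarrow> complex) \<Rightarrow> real" where
  "l2norm \<Omega> f = sqrt (enn2real (\<integral>\<^sup>+x\<in>\<Omega>. ennreal ((cmod (f x))\<^sup>2) \<partial>lebesgue))"

definition l2inner :: "'a::euclidean_space set \<Rightarrow> ('a \<Rightarrow> complex) \<Rightarrow> ('a \<Rightarrow> complex) \<Rightarrow> real" where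
  "l2inner \<Omega> f g = (\<integral>x\<in>\<Omega>. Re (cnj (f x) * g x) \<partial>lebesgue)"

definition C1c :: "'a::euclidean_space set \<Rightarrow> ('a \<Rightarrow> complex) \<Rightarrow> ('a \<Rightarrow> 'a \<Rightarrow> complex) \<Rightarrow> bool" where
  "C1c \<Omega> f f' \<longleftrightarrow> (\<forall>x. (f has_derivative f' x) (at x)) \<and>
     (\<forall>v. continuous_on UNIV (\<lambda>x. f' x v)) \<and>
     compact (closure {x. f x \<noteq> 0}) \<and> closure {x. f x \<noteq> 0} \<subseteq> \<Omega>"

definition cgrad :: "('a::euclidean_space \<Rightarrow> complex) \<Rightarrow> 'a \<times> 'a" where
  "cgrad D = ((\<Sum>b\<in>Basis. Re (D b) *\<^sub>R b), (\<Sum>b\<in>Basis. Im (D b) *\<^sub>R b))"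

definition W0grad :: "real \<Rightarrow> 'a::euclidean_space set \<Rightarrow> ('a \<Rightarrow> complex) \<Rightarrow> ('a \<Rightarrow> 'a \<times> 'a) \<Rightarrow> bool" where
  "W0grad p \<Omega> U G \<longleftrightarrow> U \<in> borel_measurable (lebesgue_on \<Omega>) \<and> G \<in> borel_measurable (lebesgue_on \<Omega>) \<and>
     (\<exists>\<phi> \<phi>'. (\<forall>k. C1c \<Omega> (\<phi> k) (\<phi>' k)) \<and>
        (\<lambda>k. \<integral>\<^sup>+x\<in>\<Omega>. ennreal (cmod (\<phi> k x - U x) powr p) \<partial>lebesgue) \<longlonglongrightarrow> 0 \<and>
        (\<lambda>k. \<integral>\<^sup>+x\<in>\<Omega>. ennreal (norm (cgrad (\<phi>' k x) - G x) powr p) \<partial>lebesgue) \<longlonglongrightarrow> 0)"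

definition W0 :: "real \<Rightarrow> 'a::euclidean_space set \<Rightarrow> ('a \<Rightarrow> complex) \<Rightarrow> bool" where
  "W0 p \<Omega> U \<longleftrightarrow> (\<exists>G. W0grad p \<Omega> U G)"

definition phi :: "real \<Rightarrow> 'a::euclidean_space set \<Rightarrow> ('a \<Rightarrow> complex) \<Rightarrow> ennreal" where
  "phi p \<Omega> U = (if L2 \<Omega> U \<and> W0 p \<Omega> U
     then (INF G\<in>{G. W0grad p \<Omega> U G}. ennreal (1/p) * (\<integral>\<^sup>+x\<in>\<Omega>. ennreal (norm (G x) powr p) \<partial>lebesgue))
     else \<infinity>)"

definition psi :: "real \<Rightarrow> 'a::euclidean_space set \<Rightarrow> ('a \<Rightarrow> complex) \<Rightarrow> ennreal" where
  "psi q \<Omega> U = (if L2 \<Omega> U \<and> Lr q \<Omega> U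
     then ennreal (1/q) * (\<integral>\<^sup>+x\<in>\<Omega>. ennreal (cmod (U x) powr q) \<partial>lebesgue)
     else \<infinity>)"

definition subdiff :: "'a::euclidean_space set \<Rightarrow> (('a \<Rightarrow> complex) \<Rightarrow> ennreal) \<Rightarrow> ('a \<Rightarrow> complex) \<Rightarrow> ('a \<Rightarrow> complex) set" where
  "subdiff \<Omega> \<Phi> U = {G. L2 \<Omega> U \<and> L2 \<Omega> G \<and> \<Phi> U < \<infinity> \<and>
      (\<forall>W. L2 \<Omega> W \<and> \<Phi> W < \<infinity> \<longrightarrow>
         enn2real (\<Phi> W) - enn2real (\<Phi> U) \<ge> l2inner \<Omega> G (\<lambda>x. W x - U x))}"

text \<open>Values of the Yosida approximation \<open>\<partial>\<Phi>_\<nu>(U) = (U - J_\<nu> U)/\<nu>\<close>, \<open>J_\<nu> = (1+\<nu>\<partial>\<Phi>)\<^sup>-\<^sup>1\<close>: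
  \<open>G = \<partial>\<Phi>_\<nu>(U)\<close> iff \<open>J_\<nu> U = U - \<nu> G\<close> and \<open>G \<in> \<partial>\<Phi>(U - \<nu> G)\<close>
  (unique up to a.e. equality).\<close>
definition yosida :: "'a::euclidean_space set \<Rightarrow> (('a \<Rightarrow> complex) \<Rightarrow> ennreal) \<Rightarrow> real \<Rightarrow> ('a \<Rightarrow> complex) \<Rightarrow> ('a \<Rightarrow> complex) set" where
  "yosida \<Omega> \<Phi> \<nu> U = {G. L2 \<Omega> U \<and> G \<in> subdiff \<Omega> \<Phi> (\<lambda>x. U x - complex_of_real \<nu> * G x)}"

definition L2L2 :: "real \<Rightarrow> 'a::euclidean_space set \<Rightarrow> (real \<Rightarrow> 'a \<Rightarrow> complex) \<Rightarrow> bool" where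
  "L2L2 T \<Omega> F \<longleftrightarrow> (\<lambda>(t,x). F t x) \<in> borel_measurable (lborel \<Otimes>\<^sub>M lborel) \<and>
     (\<integral>\<^sup>+t\<in>{0..T}. (\<integral>\<^sup>+x\<in>\<Omega>. ennreal ((cmod (F t x))\<^sup>2) \<partial>lebesgue) \<partial>lborel) < \<infinity>"

definition L2L2norm_sq :: "real \<Rightarrow> 'a::euclidean_space set \<Rightarrow> (real \<Rightarrow> 'a \<Rightarrow> complex) \<Rightarrow> real" where
  "L2L2norm_sq T \<Omega> F = enn2real (\<integral>\<^sup>+t\<in>{0..T}. (\<integral>\<^sup>+x\<in>\<Omega>. ennreal ((cmod (F t x))\<^sup>2) \<partial>lebesgue) \<partial>lborel)"

text \<open>\<open>U\<close> is a solution of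
  \<open>U' + \<partial>(\<lambda>\<phi>+\<kappa>\<psi>)(U) + \<alpha> I \<partial>\<phi>_\<nu>(U) + B(U) = F\<close> on \<open>(0,T)\<close>, \<open>U(0) = U0\<close>.
  \<open>U \<in> W^{1,2}(0,T;\<L>\<^sup>2)\<close> with \<open>U(0)=U0\<close> is expressed by \<open>U(t) = U0 + \<integral>_0^t V\<close> in \<open>\<L>\<^sup>2\<close>
  for all \<open>t \<in> [0,T]\<close> with \<open>V = dU/dt \<in> L\<^sup>2(0,T;\<L>\<^sup>2)\<close>.\<close>
definition is_solution ::
  "'a::euclidean_space set \<Rightarrow> real \<Rightarrow> real \<Rightarrow> real \<Rightarrow> real \<Rightarrow> real \<Rightarrow> real \<Rightarrow> real \<Rightarrow>
   (('a \<Rightarrow> complex) \<Rightarrow> ('a \<Rightarrow> complex)) \<Rightarrow> (real \<Rightarrow> 'a \<Rightarrow> complex) \<Rightarrow> ('a \<Rightarrow> complex) \<Rightarrow>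
   (real \<Rightarrow> 'a \<Rightarrow> complex) \<Rightarrow> bool" where
  "is_solution \<Omega> p q lam kap \<alpha> \<nu> T B F U0 U \<longleftrightarrow>
     (\<forall>t\<in>{0..T}. L2 \<Omega> (U t)) \<and>
     (\<exists>V. L2L2 T \<Omega> V \<and>
        (\<forall>t\<in>{0..T}. AE x in lebesgue_on \<Omega>.
            set_integrable lborel {0..t} (\<lambda>s. V s x) \<and>
            U t x = U0 x + (\<integral>s\<in>{0..t}. V s x \<partial>lborel)) \<and>
        (AE t in lborel. t \<in> {0<..<T} \<longrightarrow>
           (\<exists>A Y. A \<in> subdiff \<Omega> (\<lambda>W. ennreal lam * phi p \<Omega> W + ennreal kap * psi q \<Omega> W) (U t) \<and>
                  Y \<in> yosida \<Omega> (phi p \<Omega>) \<nu> (U t) \<and>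
                  (AE x in lebesgue_on \<Omega>.
                     V t x + A x + complex_of_real \<alpha> * \<i> * Y x + B (U t) x = F t x)))) \<and>
     (\<exists>P Q. L2L2 T \<Omega> P \<and> L2L2 T \<Omega> Q \<and>
        (AE t in lborel. t \<in> {0<..<T} \<longrightarrow>
           P t \<in> subdiff \<Omega> (phi p \<Omega>) (U t) \<and> Q t \<in> subdiff \<Omega> (psi q \<Omega>) (U t)))"

end

theory Submission
  imports Defs
begin

lemma bm_cnj[measurable (raw)]: "f \<in> borel_measurable M \<Longrightarrow> (\<lambda>x. cnj (f x)) \<in> borel_measurable M"
  by (rule borel_measurable_continuous_on[OF continuous_on_cnj[OF continuous_on_id]])

lemma prod_integrable:
  fixes f g :: "real \<Rightarrow> complex"
  assumes f: "integrable lborel f" and g: "integrable lborel g"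
  shows "integrable (lborel \<Otimes>\<^sub>M lborel) (\<lambda>(s,r). f s * g r)"
proof -
  have fm[measurable]: "f \<in> borel_measurable lborel" using f by auto
  have gm[measurable]: "g \<in> borel_measurable lborel" using g by auto
  show ?thesis
  proof (rule lborel_pair.Fubini_integrable)
    show "(\<lambda>(s,r). f s * g r) \<in> borel_measurable (lborel \<Otimes>\<^sub>M lborel)" by measurable
    have "integrable lborel (\<lambda>s. norm (f s) * (\<integral>r. norm (g r) \<partial>lborel))"
      using f by (intro integrable_mult_left) auto
    then show "integrable lborel (\<lambda>s. \<integral>r. norm (case (s, r) of (s, r) \<Rightarrow> f s * g r) \<partial>lborel)"
      by (simp add: norm_mult)
    show "AE s in lborel. integrable lborel (\<lambda>r. case (s, r) of (s, r) \<Rightarrow> f s * g r)"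
      using g by (auto intro!: integrable_mult_right)
  qed
qed

lemma cmod_add_sq: "(cmod (c + w))\<^sup>2 = (cmod c)\<^sup>2 + 2 * Re (cnj w * c) + (cmod w)\<^sup>2"
  unfolding cmod_power2 by (simp add: power2_sum power2_diff algebra_simps)

lemma oneD:
  fixes v :: "real \<Rightarrow> complex" and c :: complex
  assumes vm[measurable]: "v \<in> borel_measurable lborel" and vi: "set_integrable lborel {0..\<tau>} v"
  defines "w \<equiv> \<lambda>s. (LINT r:{0..s}|lborel. v r)"
  shows "set_integrable lborel {0..\<tau>} (\<lambda>s. Re (cnj (v s) * (c + w s)))"
    "(cmod (c + w \<tau>))\<^sup>2 = (cmod c)\<^sup>2 + 2 * (LINT s:{0..\<tau>}|lborel. Re (cnj (v s) * (c + w s)))"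
proof -
  define f where "f = (\<lambda>s. indicator {0..\<tau>} s *\<^sub>R v s)"
  have fi: "integrable lborel f" using vi unfolding f_def set_integrable_def .
  have fm[measurable]: "f \<in> borel_measurable lborel" unfolding f_def by measurable
  have cfi: "integrable lborel (\<lambda>s. cnj (f s))" using fi by simp
  define F where "F = (\<lambda>(s,r). cnj (f s) * f r)"
  have Fi: "integrable (lborel \<Otimes>\<^sub>M lborel) F" unfolding F_def by (rule prod_integrable[OF cfi fi])
  have Fm[measurable]: "F \<in> borel_measurable (lborel \<Otimes>\<^sub>M lborel)" using Fi by auto
  define F1 where "F1 = (\<lambda>(s::real,r::real). (if r \<le> s then 1 else 0) * cnj (f s) * f r)"
  define F2 where "F2 = (\<lambda>(s::real,r::real). (if s < r then 1 else 0) * cnj (f s) * f r)"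
  have FF: "F = (\<lambda>p. F1 p + F2 p)" unfolding F_def F1_def F2_def by (auto simp: fun_eq_iff)
  have F1i: "integrable (lborel \<Otimes>\<^sub>M lborel) F1"
  proof -
    have "{p::real\<times>real. p \<in> space (lborel \<Otimes>\<^sub>M lborel) \<and> snd p \<le> fst p} \<in> sets (lborel \<Otimes>\<^sub>M lborel)" by measurable
    then have "{p::real\<times>real. snd p \<le> fst p} \<in> sets (lborel \<Otimes>\<^sub>M lborel)" by (simp add: space_pair_measure)
    then have "integrable (lborel \<Otimes>\<^sub>M lborel) (\<lambda>p. indicator {p::real\<times>real. snd p \<le> fst p} p *\<^sub>R F p)"
      by (rule integrable_mult_indicator[OF _ Fi])
    moreover have "(\<lambda>p. indicator {p::real\<times>real. snd p \<le> fst p} p *\<^sub>R F p) = F1"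
      unfolding F1_def F_def by (auto simp: fun_eq_iff split: split_indicator)
    ultimately show ?thesis by simp
  qed
  have F2i: "integrable (lborel \<Otimes>\<^sub>M lborel) F2"
  proof -
    have "{p::real\<times>real. p \<in> space (lborel \<Otimes>\<^sub>M lborel) \<and> fst p < snd p} \<in> sets (lborel \<Otimes>\<^sub>M lborel)" by measurable
    then have "{p::real\<times>real. fst p < snd p} \<in> sets (lborel \<Otimes>\<^sub>M lborel)" by (simp add: space_pair_measure)
    then have "integrable (lborel \<Otimes>\<^sub>M lborel) (\<lambda>p. indicator {p::real\<times>real. fst p < snd p} p *\<^sub>R F p)"
      by (rule integrable_mult_indicator[OF _ Fi])
    moreover have "(\<lambda>p. indicator {p::real\<times>real. fst p < snd p} p *\<^sub>R F p) = F2"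
      unfolding F2_def F_def by (auto simp: fun_eq_iff split: split_indicator)
    ultimately show ?thesis by simp
  qed
  have wf: "w \<tau> = integral\<^sup>L lborel f" unfolding w_def f_def set_lebesgue_integral_def ..
  have eqF: "integral\<^sup>L (lborel \<Otimes>\<^sub>M lborel) F = cnj (w \<tau>) * w \<tau>"
  proof -
    have "integral\<^sup>L (lborel \<Otimes>\<^sub>M lborel) F = (LBINT s. LBINT r. F (s, r))"
      by (rule lborel_pair.integral_fst'[OF Fi, symmetric])
    also have "\<dots> = (LBINT s. cnj (f s) * integral\<^sup>L lborel f)"
      unfolding F_def by simp
    also have "\<dots> = cnj (w \<tau>) * w \<tau>" using cfi by (simp add: wf)
    finally show ?thesis .
  qed
  have inner1: "(LBINT r. F1 (s, r)) = cnj (f s) * w s" for s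
  proof (cases "s \<in> {0..\<tau>}")
    case True
    have "F1 (s, r) = cnj (f s) * (indicator {0..s} r *\<^sub>R v r)" for r
      using True by (auto simp: F1_def f_def split: split_indicator)
    then have "(LBINT r. F1 (s, r)) = (LBINT r. cnj (f s) * (indicator {0..s} r *\<^sub>R v r))"
      by simp
    also have "\<dots> = cnj (f s) * (LBINT r. indicator {0..s} r *\<^sub>R v r)"
      by (rule integral_mult_right_zero)
    finally show ?thesis by (simp only: w_def set_lebesgue_integral_def)
  next
    case False
    then show ?thesis unfolding F1_def f_def by simp
  qed
  have inner2: "(LBINT s. F2 (s, r)) = f r * cnj (w r)" for r
  proof (cases "r \<in> {0..\<tau>}")
    case True
    have "F2 (s, r) = f r * cnj (indicator {0..<r} s *\<^sub>R v s)" for s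
      using True by (auto simp: F2_def f_def split: split_indicator)
    then have "(LBINT s. F2 (s, r)) = (LBINT s. f r * cnj (indicator {0..<r} s *\<^sub>R v s))"
      by simp
    also have "\<dots> = f r * (LBINT s. cnj (indicator {0..<r} s *\<^sub>R v s))"
      by (rule integral_mult_right_zero)
    also have "\<dots> = f r * cnj (LBINT s. indicator {0..<r} s *\<^sub>R v s)"
      by (rule arg_cong[where f="(*) (f r)"], rule Bochner_Integration.integral_cnj)
    also have "(LBINT s. indicator {0..<r} s *\<^sub>R v s) = w r"
      unfolding w_def set_lebesgue_integral_def
      by (rule integral_cong_AE) (auto intro!: eventually_mono[OF AE_lborel_singleton[of r]] split: split_indicator)
    finally show ?thesis .
  next
    case False
    then show ?thesis unfolding F2_def f_def by simp
  qed
  have G1i: "integrable lborel (\<lambda>s. cnj (f s) * w s)"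
    using lborel_pair.integrable_fst'[OF F1i] by (simp add: inner1)
  have G1: "integral\<^sup>L (lborel \<Otimes>\<^sub>M lborel) F1 = (LBINT s. cnj (f s) * w s)"
    using lborel_pair.integral_fst'[OF F1i] by (simp add: inner1)
  have F2i': "integrable (lborel \<Otimes>\<^sub>M lborel) (case_prod (\<lambda>s r. F2 (s,r)))" using F2i by simp
  have G2: "integral\<^sup>L (lborel \<Otimes>\<^sub>M lborel) F2 = (LBINT r. f r * cnj (w r))"
    using lborel_pair.integral_snd[OF F2i'] by (simp add: inner2)
  have G2i: "integrable lborel (\<lambda>r. f r * cnj (w r))"
    using lborel_pair.integrable_snd[OF F2i'] by (simp add: inner2)
  have sq: "(cmod (w \<tau>))\<^sup>2 = 2 * (LBINT s. Re (cnj (f s) * w s))"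
  proof -
    have "(cmod (w \<tau>))\<^sup>2 = Re (cnj (w \<tau>) * w \<tau>)" unfolding cmod_power2 by (simp add: power2_eq_square)
    also have "\<dots> = Re (integral\<^sup>L (lborel \<Otimes>\<^sub>M lborel) F)" by (simp add: eqF)
    also have "\<dots> = Re (integral\<^sup>L (lborel \<Otimes>\<^sub>M lborel) F1) + Re (integral\<^sup>L (lborel \<Otimes>\<^sub>M lborel) F2)"
      unfolding FF using F1i F2i by simp
    also have "\<dots> = (LBINT s. Re (cnj (f s) * w s)) + (LBINT s. Re (f s * cnj (w s)))"
      unfolding G1 G2 integral_Re[OF G1i] integral_Re[OF G2i] ..
    also have "(LBINT s. Re (f s * cnj (w s))) = (LBINT s. Re (cnj (f s) * w s))"
      by (simp add: algebra_simps)
    finally show ?thesis by simp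
  qed
  have ci: "integrable lborel (\<lambda>s. Re (cnj (f s) * c))" using cfi by (intro integrable_Re integrable_mult_left)
  have cint: "(LBINT s. Re (cnj (f s) * c)) = Re (cnj (w \<tau>) * c)"
    using cfi by (simp add: wf)
  have G1ir: "integrable lborel (\<lambda>s. Re (cnj (f s) * w s))" using G1i by (rule integrable_Re)
  have eqfun: "(\<lambda>s. indicator {0..\<tau>} s *\<^sub>R Re (cnj (v s) * (c + w s))) = (\<lambda>s. Re (cnj (f s) * c) + Re (cnj (f s) * w s))"
    unfolding f_def by (auto simp: fun_eq_iff algebra_simps split: split_indicator)
  show "set_integrable lborel {0..\<tau>} (\<lambda>s. Re (cnj (v s) * (c + w s)))"
    unfolding set_integrable_def eqfun using ci G1ir by (rule Bochner_Integration.integrable_add)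
  have "(LINT s:{0..\<tau>}|lborel. Re (cnj (v s) * (c + w s))) = Re (cnj (w \<tau>) * c) + (LBINT s. Re (cnj (f s) * w s))"
    unfolding set_lebesgue_integral_def eqfun using ci G1ir cint by simp
  then show "(cmod (c + w \<tau>))\<^sup>2 = (cmod c)\<^sup>2 + 2 * (LINT s:{0..\<tau>}|lborel. Re (cnj (v s) * (c + w s)))"
    using sq cmod_add_sq[of c "w \<tau>"] by simp
qed

lemma energy:
  fixes \<Omega> :: "'a::euclidean_space set" and V U :: "real \<Rightarrow> 'a \<Rightarrow> complex" and U0 :: "'a \<Rightarrow> complex"
  assumes \<Omega>s: "\<Omega> \<in> sets lebesgue" and fin: "finite_measure (lebesgue_on \<Omega>)"
  and Vm: "(\<lambda>(t,x). V t x) \<in> borel_measurable (lborel \<Otimes>\<^sub>M lborel)"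
  and VL2: "(\<integral>\<^sup>+t\<in>{0..T}. (\<integral>\<^sup>+x\<in>\<Omega>. ennreal ((cmod (V t x))\<^sup>2) \<partial>lebesgue) \<partial>lborel) < \<infinity>"
  and U0m: "U0 \<in> borel_measurable (lebesgue_on \<Omega>)"
  and U0f: "(\<integral>\<^sup>+x. ennreal ((cmod (U0 x))\<^sup>2) \<partial>lebesgue_on \<Omega>) < \<infinity>"
  and hyp: "\<forall>t\<in>{0..T}. AE x in lebesgue_on \<Omega>. set_integrable lborel {0..t} (\<lambda>s. V s x) \<and>
            U t x = U0 x + (\<integral>s\<in>{0..t}. V s x \<partial>lborel)"
  and Um: "\<forall>t\<in>{0..T}. U t \<in> borel_measurable (lebesgue_on \<Omega>)"
  and \<tau>: "0 \<le> \<tau>" "\<tau> \<le> T"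
  shows "set_integrable lborel {0..\<tau>} (\<lambda>s. l2inner \<Omega> (V s) (U s))"
   "(\<integral>x. (cmod (U \<tau> x))\<^sup>2 \<partial>lebesgue_on \<Omega>) = (\<integral>x. (cmod (U0 x))\<^sup>2 \<partial>lebesgue_on \<Omega>)
       + 2 * (LINT s:{0..\<tau>}|lborel. l2inner \<Omega> (V s) (U s))"
proof -
  define M where "M = lebesgue_on \<Omega>"
  interpret M: finite_measure M unfolding M_def by (rule fin)
  interpret P: pair_sigma_finite lborel M by standard
  have idm: "(\<lambda>x. x) \<in> measurable M lborel"
    unfolding M_def by (simp add: measurable_restrict_space1 measurable_completion)
  have Vpm[measurable]: "(\<lambda>(t,x). V t x) \<in> borel_measurable (lborel \<Otimes>\<^sub>M M)"
  proof -
    have "(\<lambda>p. (fst p, snd p)) \<in> measurable (lborel \<Otimes>\<^sub>M M) (lborel \<Otimes>\<^sub>M lborel)"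
      by (intro measurable_Pair measurable_fst measurable_compose[OF measurable_snd idm])
    from measurable_compose[OF this Vm] show ?thesis by (simp add: case_prod_beta')
  qed
  have U0m'[measurable]: "U0 \<in> borel_measurable M" using U0m by (simp add: M_def)
  define W where "W = (\<lambda>s x. \<integral>r. (if 0 \<le> r \<and> r \<le> s then V r x else 0) \<partial>lborel)"
  have Wm[measurable]: "(\<lambda>(s,x). W s x) \<in> borel_measurable (lborel \<Otimes>\<^sub>M M)"
    unfolding W_def by measurable
  have Wset: "W s x = (LINT r:{0..s}|lborel. V r x)" for s x
    unfolding W_def set_lebesgue_integral_def
    by (rule Bochner_Integration.integral_cong) (auto split: split_indicator)
  define Q where "Q = (\<lambda>s x. if 0 \<le> s \<and> s \<le> \<tau> then Re (cnj (V s x) * (U0 x + W s x)) else 0)"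
  have Qm[measurable]: "(\<lambda>(s,x). Q s x) \<in> borel_measurable (lborel \<Otimes>\<^sub>M M)"
    unfolding Q_def by measurable
  have Vsec[measurable]: "(\<lambda>r. V r x) \<in> borel_measurable lborel" for x
    using measurable_Pair1[OF Vm, of x] by simp
  have Vsec2[measurable]: "(\<lambda>x. V r x) \<in> borel_measurable M" for r
    using measurable_Pair2[OF Vpm, of r] by simp
  define N where "N = (\<lambda>x. \<integral>\<^sup>+r. ennreal ((cmod (V r x))\<^sup>2) * indicator {0..T} r \<partial>lborel)"
  define Wn where "Wn = (\<lambda>x. \<integral>\<^sup>+r. ennreal (cmod (V r x)) * indicator {0..T} r \<partial>lborel)"
  have T0: "0 \<le> T" using \<tau> by simp
  have Wn_sq: "Wn x ^ 2 \<le> N x * ennreal T" for x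
  proof -
    have "(\<integral>\<^sup>+r. (ennreal (cmod (V r x)) * indicator {0..T} r) * indicator {0..T} r \<partial>lborel)\<^sup>2
       \<le> (\<integral>\<^sup>+r. (ennreal (cmod (V r x)) * indicator {0..T} r) ^ 2 \<partial>lborel) * (\<integral>\<^sup>+r. (indicator {0..T} r :: ennreal) ^ 2 \<partial>lborel)"
      by (rule Cauchy_Schwarz_nn_integral) measurable
    moreover have "(\<lambda>r. (ennreal (cmod (V r x)) * indicator {0..T} r) * indicator {0..T} r) = (\<lambda>r. ennreal (cmod (V r x)) * indicator {0..T} r)"
      by (auto simp: fun_eq_iff split: split_indicator)
    moreover have "(\<lambda>r. (ennreal (cmod (V r x)) * indicator {0..T} r) ^ 2) = (\<lambda>r. ennreal ((cmod (V r x))\<^sup>2) * indicator {0..T} r)"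
      by (auto simp: fun_eq_iff ennreal_power split: split_indicator)
    moreover have "(\<integral>\<^sup>+r. (indicator {0..T} r :: ennreal) ^ 2 \<partial>lborel) = ennreal T"
    proof -
      have "(\<lambda>r. (indicator {0..T} r :: ennreal) ^ 2) = indicator {0..T}"
        by (auto simp: fun_eq_iff split: split_indicator)
      then show ?thesis using T0 by simp
    qed
    ultimately show ?thesis unfolding Wn_def N_def by simp
  qed
  have Wbound: "ennreal (cmod (W s x)) \<le> Wn x" if "s \<le> T" for s x
  proof (cases "integrable lborel (\<lambda>r. if 0 \<le> r \<and> r \<le> s then V r x else 0)")
    case True
    have "ennreal (cmod (W s x)) \<le> (\<integral>\<^sup>+r. norm (if 0 \<le> r \<and> r \<le> s then V r x else 0) \<partial>lborel)"
      unfolding W_def by (rule integral_norm_bound_ennreal[OF True])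
    also have "\<dots> \<le> Wn x" unfolding Wn_def
      by (rule nn_integral_mono) (use that in \<open>auto split: split_indicator\<close>)
    finally show ?thesis .
  next
    case False
    then show ?thesis unfolding W_def by (simp add: not_integrable_integral_eq)
  qed
  have Qbound: "ennreal (norm (Q s x)) \<le> (ennreal ((cmod (V s x))\<^sup>2) + ennreal ((cmod (U0 x))\<^sup>2) + Wn x ^ 2) * indicator {0..T} s" for s x
  proof (cases "0 \<le> s \<and> s \<le> \<tau>")
    case True
    let ?v = "cmod (V s x)" and ?u = "cmod (U0 x)" and ?w = "cmod (W s x)"
    have "norm (Q s x) \<le> cmod (cnj (V s x) * (U0 x + W s x))"
      unfolding Q_def real_norm_def if_P[OF True] by (rule abs_Re_le_cmod)
    also have "\<dots> \<le> ?v * (?u + ?w)"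
      by (simp add: norm_mult mult_left_mono norm_triangle_ineq)
    also have "\<dots> \<le> ?v\<^sup>2 + ?u\<^sup>2 + ?w\<^sup>2"
    proof -
      have a: "2 * (?v * ?u) \<le> ?v\<^sup>2 + ?u\<^sup>2" "2 * (?v * ?w) \<le> ?v\<^sup>2 + ?w\<^sup>2"
        using sum_squares_bound[of ?v ?u] sum_squares_bound[of ?v ?w] by (simp_all add: mult.assoc)
      have b: "0 \<le> ?u\<^sup>2" "0 \<le> ?w\<^sup>2" by simp_all
      show ?thesis unfolding distrib_left using a b by linarith
    qed
    finally have r: "norm (Q s x) \<le> ?v\<^sup>2 + ?u\<^sup>2 + ?w\<^sup>2" .
    have "ennreal (norm (Q s x)) \<le> ennreal (?v\<^sup>2 + ?u\<^sup>2 + ?w\<^sup>2)"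
      using r by (rule ennreal_leI)
    also have "\<dots> = ennreal (?v\<^sup>2) + ennreal (?u\<^sup>2) + ennreal ?w ^ 2"
      by (simp add: ennreal_plus ennreal_power)
    also have "ennreal ?w ^ 2 \<le> Wn x ^ 2"
      using Wbound[of s x] True \<tau> by (intro power_mono) auto
    finally show ?thesis using True \<tau> by (simp add: add_left_mono)
  next
    case False
    then have "Q s x = 0" unfolding Q_def by auto
    then show ?thesis by simp
  qed
  have Nm[measurable]: "N \<in> borel_measurable M" unfolding N_def by measurable
  have NM: "(\<integral>\<^sup>+x. N x \<partial>M) < \<infinity>"
  proof -
    have "(\<integral>\<^sup>+x. N x \<partial>M) = (\<integral>\<^sup>+r. (\<integral>\<^sup>+x. ennreal ((cmod (V r x))\<^sup>2) * indicator {0..T} r \<partial>M) \<partial>lborel)"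
      unfolding N_def using P.Fubini[of "\<lambda>(r,x). ennreal ((cmod (V r x))\<^sup>2) * indicator {0..T} r"] by simp
    also have "\<dots> = (\<integral>\<^sup>+r. (\<integral>\<^sup>+x. ennreal ((cmod (V r x))\<^sup>2) \<partial>M) * indicator {0..T} r \<partial>lborel)"
      by (intro nn_integral_cong nn_integral_multc) measurable
    also have "\<dots> = (\<integral>\<^sup>+t\<in>{0..T}. (\<integral>\<^sup>+x\<in>\<Omega>. ennreal ((cmod (V t x))\<^sup>2) \<partial>lebesgue) \<partial>lborel)"
      unfolding M_def using \<Omega>s by (simp add: nn_integral_restrict_space)
    finally show ?thesis using VL2 by simp
  qed
  have U0f': "(\<integral>\<^sup>+x. ennreal ((cmod (U0 x))\<^sup>2) \<partial>M) < \<infinity>" using U0f by (simp add: M_def)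
  have Qint: "integrable (lborel \<Otimes>\<^sub>M M) (\<lambda>(s,x). Q s x)"
  proof (rule integrableI_bounded)
    show "(\<lambda>(s,x). Q s x) \<in> borel_measurable (lborel \<Otimes>\<^sub>M M)" by (rule Qm)
    have "(\<integral>\<^sup>+p. ennreal (norm (case p of (s,x) \<Rightarrow> Q s x)) \<partial>(lborel \<Otimes>\<^sub>M M)) = (\<integral>\<^sup>+x. (\<integral>\<^sup>+s. ennreal (norm (Q s x)) \<partial>lborel) \<partial>M)"
      using P.nn_integral_snd[of "\<lambda>p. ennreal (norm (case p of (s,x) \<Rightarrow> Q s x))"] by simp
    also have "\<dots> \<le> (\<integral>\<^sup>+x. N x + N x * ennreal T * ennreal T + ennreal ((cmod (U0 x))\<^sup>2) * ennreal T \<partial>M)"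
    proof (rule nn_integral_mono)
      fix x
      have "(\<integral>\<^sup>+s. ennreal (norm (Q s x)) \<partial>lborel) \<le> (\<integral>\<^sup>+s. (ennreal ((cmod (V s x))\<^sup>2) + ennreal ((cmod (U0 x))\<^sup>2) + Wn x ^ 2) * indicator {0..T} s \<partial>lborel)"
        by (rule nn_integral_mono) (rule Qbound)
      also have "\<dots> = (\<integral>\<^sup>+s. ennreal ((cmod (V s x))\<^sup>2) * indicator {0..T} s + (ennreal ((cmod (U0 x))\<^sup>2) + Wn x ^ 2) * indicator {0..T} s \<partial>lborel)"
        by (intro nn_integral_cong) (simp add: distrib_right add.assoc)
      also have "\<dots> = N x + (ennreal ((cmod (U0 x))\<^sup>2) + Wn x ^ 2) * ennreal T"
        unfolding N_def by (subst nn_integral_add) (auto simp: nn_integral_cmult_indicator T0)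
      also have "\<dots> \<le> N x + N x * ennreal T * ennreal T + ennreal ((cmod (U0 x))\<^sup>2) * ennreal T"
      proof -
        have "Wn x ^ 2 * ennreal T \<le> N x * ennreal T * ennreal T"
          using Wn_sq[of x] by (intro mult_right_mono) auto
        then show ?thesis by (simp add: distrib_right add_ac add_left_mono)
      qed
      finally show "(\<integral>\<^sup>+s. ennreal (norm (Q s x)) \<partial>lborel) \<le> N x + N x * ennreal T * ennreal T + ennreal ((cmod (U0 x))\<^sup>2) * ennreal T" .
    qed
    also have "\<dots> = (\<integral>\<^sup>+x. N x \<partial>M) + (\<integral>\<^sup>+x. N x \<partial>M) * ennreal T * ennreal T + (\<integral>\<^sup>+x. ennreal ((cmod (U0 x))\<^sup>2) \<partial>M) * ennreal T"
      by (simp add: nn_integral_add nn_integral_multc)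
    also have "\<dots> < \<infinity>"
      using NM U0f' by (simp add: less_top[symmetric] ennreal_mult_eq_top_iff)
    finally show "(\<integral>\<^sup>+p. ennreal (norm (case p of (s,x) \<Rightarrow> Q s x)) \<partial>(lborel \<Otimes>\<^sub>M M)) < \<infinity>" .
  qed
  have hypM: "\<forall>t\<in>{0..T}. AE x in M. set_integrable lborel {0..t} (\<lambda>s. V s x) \<and>
            U t x = U0 x + (\<integral>s\<in>{0..t}. V s x \<partial>lborel)" using hyp unfolding M_def .
  have Qsec[measurable]: "(\<lambda>x. Q s x) \<in> borel_measurable M" for s
    using measurable_Pair2[OF Qm, of s] by simp
  have ae: "AE x in M. (cmod (U \<tau> x))\<^sup>2 = (cmod (U0 x))\<^sup>2 + 2 * (\<integral>s. Q s x \<partial>lborel)"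
  proof -
    have "AE x in M. set_integrable lborel {0..T} (\<lambda>s. V s x) \<and> U T x = U0 x + (\<integral>s\<in>{0..T}. V s x \<partial>lborel)"
      using hypM T0 by auto
    moreover have "AE x in M. set_integrable lborel {0..\<tau>} (\<lambda>s. V s x) \<and> U \<tau> x = U0 x + (\<integral>s\<in>{0..\<tau>}. V s x \<partial>lborel)"
      using hypM \<tau> by auto
    ultimately show ?thesis
    proof eventually_elim
      case (elim x)
      have si: "set_integrable lborel {0..\<tau>} (\<lambda>s. V s x)" using elim by simp
      note o = oneD[OF Vsec[of x] si, of "U0 x"]
      have "(LINT s:{0..\<tau>}|lborel. Re (cnj (V s x) * (U0 x + (LINT r:{0..s}|lborel. V r x)))) = (\<integral>s. Q s x \<partial>lborel)"
        unfolding set_lebesgue_integral_def[of _ "{0..\<tau>}"] Q_def Wset[symmetric]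
        by (rule Bochner_Integration.integral_cong) (auto split: split_indicator)
      then show ?case using o(2) elim by simp
    qed
  qed
  have Utm0[measurable]: "U \<tau> \<in> borel_measurable M" using Um \<tau> unfolding M_def by auto
  have Utm: "(\<lambda>x. (cmod (U \<tau> x))\<^sup>2) \<in> borel_measurable M" by measurable
  have intU0: "integrable M (\<lambda>x. (cmod (U0 x))\<^sup>2)"
    by (rule integrableI_bounded) (use U0f' in auto)
  have intQx: "integrable M (\<lambda>x. \<integral>s. Q s x \<partial>lborel)"
    using P.integrable_snd[OF Qint] by simp
  have inner: "(\<integral>x. Q s x \<partial>M) = indicator {0..\<tau>} s * l2inner \<Omega> (V s) (U s)" for s
  proof (cases "0 \<le> s \<and> s \<le> \<tau>")
    case True
    have Usm[measurable]: "U s \<in> borel_measurable M" using Um True \<tau> unfolding M_def by auto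
    have "AE x in M. U s x = U0 x + (\<integral>r\<in>{0..s}. V r x \<partial>lborel)"
      using hypM True \<tau> by (auto elim!: AE_mp)
    then have "AE x in M. Q s x = Re (cnj (V s x) * U s x)"
      by eventually_elim (simp add: Q_def Wset True)
    then have "(\<integral>x. Q s x \<partial>M) = (\<integral>x. Re (cnj (V s x) * U s x) \<partial>M)"
      by (intro integral_cong_AE) measurable
    also have "\<dots> = l2inner \<Omega> (V s) (U s)"
      unfolding l2inner_def M_def set_lebesgue_integral_def using \<Omega>s
      by (simp add: integral_restrict_space)
    finally show ?thesis using True by simp
  next
    case False
    then have "\<And>x. Q s x = 0" unfolding Q_def by auto
    then show ?thesis using False by simp
  qed
  have fst_int: "integrable lborel (\<lambda>s. \<integral>x. Q s x \<partial>M)"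
    using P.integrable_fst[OF Qint] by simp
  show "set_integrable lborel {0..\<tau>} (\<lambda>s. l2inner \<Omega> (V s) (U s))"
    unfolding set_integrable_def using fst_int by (simp add: inner)
  have "(\<integral>x. (cmod (U \<tau> x))\<^sup>2 \<partial>M) = (\<integral>x. (cmod (U0 x))\<^sup>2 + 2 * (\<integral>s. Q s x \<partial>lborel) \<partial>M)"
    by (rule integral_cong_AE) (use Utm intU0 intQx ae in auto)
  also have "\<dots> = (\<integral>x. (cmod (U0 x))\<^sup>2 \<partial>M) + 2 * (\<integral>x. (\<integral>s. Q s x \<partial>lborel) \<partial>M)"
    using intU0 intQx by simp
  also have "(\<integral>x. (\<integral>s. Q s x \<partial>lborel) \<partial>M) = (\<integral>s. (\<integral>x. Q s x \<partial>M) \<partial>lborel)"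
    using P.Fubini_integral[OF Qint] by simp
  also have "\<dots> = (LINT s:{0..\<tau>}|lborel. l2inner \<Omega> (V s) (U s))"
    unfolding set_lebesgue_integral_def by (simp add: inner)
  finally show "(\<integral>x. (cmod (U \<tau> x))\<^sup>2 \<partial>lebesgue_on \<Omega>) = (\<integral>x. (cmod (U0 x))\<^sup>2 \<partial>lebesgue_on \<Omega>)
       + 2 * (LINT s:{0..\<tau>}|lborel. l2inner \<Omega> (V s) (U s))" unfolding M_def .
qed

definition rot :: "complex \<Rightarrow> 'a::real_normed_vector \<times> 'a \<Rightarrow> 'a \<times> 'a" where
  "rot c g = (Re c *\<^sub>R fst g - Im c *\<^sub>R snd g, Im c *\<^sub>R fst g + Re c *\<^sub>R snd g)"

lemma cgrad_mult: "cgrad (\<lambda>v. c * D v) = rot c (cgrad D)"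
  unfolding cgrad_def rot_def
  by (simp add: scaleR_sum_right sum_subtractf sum.distrib scaleR_diff_left scaleR_add_left algebra_simps)

lemma rot_diff: "rot c g - rot c h = rot c (g - h)"
  unfolding rot_def by (simp add: algebra_simps)

lemma norm_rot:
  fixes g :: "'a::real_inner \<times> 'a"
  assumes "cmod c = 1" shows "norm (rot c g) = norm g"
proof -
  have c: "(Re c)\<^sup>2 + (Im c)\<^sup>2 = 1" using assms by (simp add: cmod_def)
  obtain x y where g: "g = (x, y)" by (cases g)
  have "(norm (Re c *\<^sub>R x - Im c *\<^sub>R y))\<^sup>2 + (norm (Im c *\<^sub>R x + Re c *\<^sub>R y))\<^sup>2
      = ((Re c)\<^sup>2 + (Im c)\<^sup>2) * ((norm x)\<^sup>2 + (norm y)\<^sup>2)"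
    unfolding power2_norm_eq_inner
    by (simp add: inner_diff_left inner_diff_right inner_add_left inner_add_right inner_commute power2_eq_square algebra_simps)
  then show ?thesis unfolding g rot_def norm_Pair using c by simp
qed

lemma W0grad_rot:
  assumes W: "W0grad p \<Omega> U G" and c: "cmod c = 1"
  shows "W0grad p \<Omega> (\<lambda>x. c * U x) (\<lambda>x. rot c (G x))"
proof -
  from W obtain \<phi> \<phi>' where Um: "U \<in> borel_measurable (lebesgue_on \<Omega>)" and Gm: "G \<in> borel_measurable (lebesgue_on \<Omega>)"
    and C: "\<And>k. C1c \<Omega> (\<phi> k) (\<phi>' k)"
    and L1: "(\<lambda>k. \<integral>\<^sup>+x\<in>\<Omega>. ennreal (cmod (\<phi> k x - U x) powr p) \<partial>lebesgue) \<longlonglongrightarrow> 0"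
    and L2: "(\<lambda>k. \<integral>\<^sup>+x\<in>\<Omega>. ennreal (norm (cgrad (\<phi>' k x) - G x) powr p) \<partial>lebesgue) \<longlonglongrightarrow> 0"
    unfolding W0grad_def by blast
  have c0: "c \<noteq> 0" using c by auto
  have "U \<in> borel_measurable (lebesgue_on \<Omega>)" by fact
  then have m1: "(\<lambda>x. c * U x) \<in> borel_measurable (lebesgue_on \<Omega>)" by measurable
  have "continuous_on UNIV (rot c :: 'a \<times> 'a \<Rightarrow> _)" unfolding rot_def by (intro continuous_intros)
  from borel_measurable_continuous_on[OF this Gm]
  have m2: "(\<lambda>x. rot c (G x)) \<in> borel_measurable (lebesgue_on \<Omega>)" .
  have C': "C1c \<Omega> (\<lambda>x. c * \<phi> k x) (\<lambda>x v. c * \<phi>' k x v)" for k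
  proof -
    from C[of k] have d: "\<And>x. (\<phi> k has_derivative \<phi>' k x) (at x)"
      and cn: "\<And>v. continuous_on UNIV (\<lambda>x. \<phi>' k x v)"
      and s: "compact (closure {x. \<phi> k x \<noteq> 0})" "closure {x. \<phi> k x \<noteq> 0} \<subseteq> \<Omega>"
      unfolding C1c_def by auto
    have "{x. c * \<phi> k x \<noteq> 0} = {x. \<phi> k x \<noteq> 0}" using c0 by auto
    moreover have "((\<lambda>x. c * \<phi> k x) has_derivative (\<lambda>v. c * \<phi>' k x v)) (at x)" for x
      using d[of x] by (rule has_derivative_mult_right)
    moreover have "continuous_on UNIV (\<lambda>x. c * \<phi>' k x v)" for v
      by (intro continuous_intros cn)
    ultimately show ?thesis unfolding C1c_def using s by auto
  qed
  have e1: "cmod (c * \<phi> k x - c * U x) = cmod (\<phi> k x - U x)" for k x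
    by (metis c mult.left_neutral norm_mult right_diff_distrib)
  have e2: "norm (cgrad (\<lambda>v. c * \<phi>' k x v) - rot c (G x)) = norm (cgrad (\<phi>' k x) - G x)" for k x
    unfolding cgrad_mult rot_diff by (rule norm_rot[OF c])
  show ?thesis unfolding W0grad_def
    using m1 m2 C' L1 L2 by (intro conjI exI[of _ "\<lambda>k x. c * \<phi> k x"] exI[of _ "\<lambda>k x v. c * \<phi>' k x v"]) (simp_all add: e1 e2)
qed

lemma Lr_rot: "cmod c = 1 \<Longrightarrow> Lr r \<Omega> U \<Longrightarrow> Lr r \<Omega> (\<lambda>x. c * U x)"
  unfolding Lr_def by (auto simp: norm_mult)

lemma phi_rot_le:
  assumes c: "cmod c = 1"
  shows "phi p \<Omega> (\<lambda>x. c * U x) \<le> phi p \<Omega> U"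
proof (cases "L2 \<Omega> U \<and> W0 p \<Omega> U")
  case True
  then obtain G0 where G0: "W0grad p \<Omega> U G0" unfolding W0_def by auto
  have L: "L2 \<Omega> (\<lambda>x. c * U x)" using Lr_rot[OF c] True by auto
  have W: "W0 p \<Omega> (\<lambda>x. c * U x)" using W0grad_rot[OF G0 c] unfolding W0_def by auto
  have "(INF G\<in>{G. W0grad p \<Omega> (\<lambda>x. c * U x) G}. ennreal (1/p) * (\<integral>\<^sup>+x\<in>\<Omega>. ennreal (norm (G x) powr p) \<partial>lebesgue))
     \<le> (INF G\<in>{G. W0grad p \<Omega> U G}. ennreal (1/p) * (\<integral>\<^sup>+x\<in>\<Omega>. ennreal (norm (G x) powr p) \<partial>lebesgue))"
  proof (rule INF_mono)
    fix G assume "G \<in> {G. W0grad p \<Omega> U G}"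
    then have "(\<lambda>x. rot c (G x)) \<in> {G. W0grad p \<Omega> (\<lambda>x. c * U x) G}" using W0grad_rot[OF _ c] by auto
    moreover have "(\<integral>\<^sup>+x\<in>\<Omega>. ennreal (norm (rot c (G x)) powr p) \<partial>lebesgue) = (\<integral>\<^sup>+x\<in>\<Omega>. ennreal (norm (G x) powr p) \<partial>lebesgue)"
      by (simp only: norm_rot[OF c])
    ultimately show "\<exists>G'\<in>{G. W0grad p \<Omega> (\<lambda>x. c * U x) G}. ennreal (1/p) * (\<integral>\<^sup>+x\<in>\<Omega>. ennreal (norm (G' x) powr p) \<partial>lebesgue)
        \<le> ennreal (1/p) * (\<integral>\<^sup>+x\<in>\<Omega>. ennreal (norm (G x) powr p) \<partial>lebesgue)"
      by (intro bexI[of _ "\<lambda>x. rot c (G x)"]) auto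
  qed
  then show ?thesis unfolding phi_def using True L W by simp
next
  case False
  then have "phi p \<Omega> U = \<infinity>" unfolding phi_def by (simp only: if_False)
  then show ?thesis by simp
qed

lemma phi_rot:
  assumes c: "cmod c = 1"
  shows "phi p \<Omega> (\<lambda>x. c * U x) = phi p \<Omega> U"
proof (rule antisym)
  show "phi p \<Omega> (\<lambda>x. c * U x) \<le> phi p \<Omega> U" by (rule phi_rot_le[OF c])
  thm norm_rot[OF c]
  have c': "cmod (cnj c) = 1" using c by simp
  have "cnj c * c = 1" using c by (metis complex_norm_square mult.commute of_real_1 power_one)
  then have "(\<lambda>x. cnj c * (c * U x)) = U" by (auto simp: fun_eq_iff mult.assoc[symmetric])
  then show "phi p \<Omega> U \<le> phi p \<Omega> (\<lambda>x. c * U x)"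
    using phi_rot_le[OF c', of p \<Omega> "\<lambda>x. c * U x"] by simp
qed

lemma bm_cnj'[measurable (raw)]: "f \<in> borel_measurable M \<Longrightarrow> (\<lambda>x. cnj (f x)) \<in> borel_measurable M"
  by (rule borel_measurable_continuous_on[OF continuous_on_cnj[OF continuous_on_id]])

lemma L2_iff:
  assumes "\<Omega> \<in> sets lebesgue"
  shows "L2 \<Omega> f \<longleftrightarrow> f \<in> borel_measurable (lebesgue_on \<Omega>) \<and> (\<integral>\<^sup>+x. ennreal ((cmod (f x))\<^sup>2) \<partial>lebesgue_on \<Omega>) < \<infinity>"
  unfolding Lr_def using assms by (simp add: nn_integral_restrict_space powr_numeral)

lemma L2_sq_integrable:
  assumes "\<Omega> \<in> sets lebesgue" "L2 \<Omega> f"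
  shows "integrable (lebesgue_on \<Omega>) (\<lambda>x. (cmod (f x))\<^sup>2)"
  using assms by (intro integrableI_bounded) (auto simp: L2_iff)

lemma l2norm_sq:
  assumes \<Omega>: "\<Omega> \<in> sets lebesgue" and f: "L2 \<Omega> f"
  shows "(l2norm \<Omega> f)\<^sup>2 = (\<integral>x. (cmod (f x))\<^sup>2 \<partial>lebesgue_on \<Omega>)"
proof -
  have "(\<integral>\<^sup>+x\<in>\<Omega>. ennreal ((cmod (f x))\<^sup>2) \<partial>lebesgue) = (\<integral>\<^sup>+x. ennreal ((cmod (f x))\<^sup>2) \<partial>lebesgue_on \<Omega>)"
    using \<Omega> by (simp add: nn_integral_restrict_space)
  also have "\<dots> = ennreal (\<integral>x. (cmod (f x))\<^sup>2 \<partial>lebesgue_on \<Omega>)"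
    by (rule nn_integral_eq_integral[OF L2_sq_integrable[OF \<Omega> f]]) simp
  finally show ?thesis unfolding l2norm_def by (simp add: integral_nonneg_AE)
qed

lemma l2norm_nn:
  assumes \<Omega>: "\<Omega> \<in> sets lebesgue" and f: "L2 \<Omega> f"
  shows "(\<integral>\<^sup>+x. ennreal ((cmod (f x))\<^sup>2) \<partial>lebesgue_on \<Omega>) = ennreal ((l2norm \<Omega> f)\<^sup>2)"
proof -
  have "(\<integral>\<^sup>+x. ennreal ((cmod (f x))\<^sup>2) \<partial>lebesgue_on \<Omega>) = ennreal (\<integral>x. (cmod (f x))\<^sup>2 \<partial>lebesgue_on \<Omega>)"
    by (rule nn_integral_eq_integral[OF L2_sq_integrable[OF \<Omega> f]]) simp
  then show ?thesis using l2norm_sq[OF \<Omega> f] by simp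
qed

lemma L2_cinner_integrable:
  assumes \<Omega>: "\<Omega> \<in> sets lebesgue" and f: "L2 \<Omega> f" and g: "L2 \<Omega> g"
  shows "integrable (lebesgue_on \<Omega>) (\<lambda>x. cnj (f x) * g x)"
proof (rule Bochner_Integration.integrable_bound)
  show "integrable (lebesgue_on \<Omega>) (\<lambda>x. (cmod (f x))\<^sup>2 + (cmod (g x))\<^sup>2)"
    using L2_sq_integrable[OF \<Omega> f] L2_sq_integrable[OF \<Omega> g] by (rule Bochner_Integration.integrable_add)
  have [measurable]: "f \<in> borel_measurable (lebesgue_on \<Omega>)" "g \<in> borel_measurable (lebesgue_on \<Omega>)"
    using f g \<Omega> by (auto simp: L2_iff)
  show "(\<lambda>x. cnj (f x) * g x) \<in> borel_measurable (lebesgue_on \<Omega>)" by measurable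
  show "AE x in lebesgue_on \<Omega>. norm (cnj (f x) * g x) \<le> norm ((cmod (f x))\<^sup>2 + (cmod (g x))\<^sup>2)"
  proof (rule AE_I2)
    fix x
    have "2 * (cmod (f x) * cmod (g x)) \<le> (cmod (f x))\<^sup>2 + (cmod (g x))\<^sup>2"
      using sum_squares_bound[of "cmod (f x)" "cmod (g x)"] by (simp add: mult.assoc)
    moreover have "0 \<le> cmod (f x) * cmod (g x)" by simp
    moreover have "norm (cnj (f x) * g x) = cmod (f x) * cmod (g x)" by (simp add: norm_mult)
    moreover have "norm ((cmod (f x))\<^sup>2 + (cmod (g x))\<^sup>2) = (cmod (f x))\<^sup>2 + (cmod (g x))\<^sup>2" by simp
    ultimately show "norm (cnj (f x) * g x) \<le> norm ((cmod (f x))\<^sup>2 + (cmod (g x))\<^sup>2)"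
      by linarith
  qed
qed

lemma L2_inner_integrable:
  assumes "\<Omega> \<in> sets lebesgue" "L2 \<Omega> f" "L2 \<Omega> g"
  shows "integrable (lebesgue_on \<Omega>) (\<lambda>x. Re (cnj (f x) * g x))"
  using L2_cinner_integrable[OF assms] by (rule integrable_Re)

lemma l2inner_M:
  assumes "\<Omega> \<in> sets lebesgue"
  shows "l2inner \<Omega> f g = (\<integral>x. Re (cnj (f x) * g x) \<partial>lebesgue_on \<Omega>)"
  unfolding l2inner_def set_lebesgue_integral_def using assms by (simp add: integral_restrict_space)

lemma aux_div: "(d::real) \<noteq> 0 \<Longrightarrow> d * ((x / d) * a - (y / d) * b) = x * a - y * b"
  by (simp add: right_diff_distrib)

lemma quad_zero:
  fixes a b :: real
  assumes h: "\<And>t. 0 \<le> t\<^sup>2 * a + t * b"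
  shows "b = 0"
proof (rule ccontr)
  assume b: "b \<noteq> 0"
  define s where "s = 1 / (2 * (\<bar>a\<bar> + 1))"
  have s0: "0 < s" unfolding s_def by (simp add: add_pos_nonneg)
  have "s * \<bar>a\<bar> < 1" unfolding s_def by (simp add: field_simps)
  then have sa: "s * a < 1" by (smt (verit) mult_left_mono s0 abs_ge_self)
  have "0 \<le> (- b * s)\<^sup>2 * a + (- b * s) * b" by (rule h)
  also have "\<dots> = b\<^sup>2 * s * (s * a - 1)" by (simp add: power2_eq_square algebra_simps)
  also have "\<dots> < 0"
    using b s0 sa by (intro mult_pos_neg) auto
  finally show False by simp
qed

lemma yosida_orth:
  assumes \<Omega>: "\<Omega> \<in> sets lebesgue" and Y: "Y \<in> subdiff \<Omega> (phi p \<Omega>) J"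
  shows "(\<integral>x. Re (cnj (Y x) * (\<i> * J x)) \<partial>lebesgue_on \<Omega>) = 0"
proof -
  from Y have LJ: "L2 \<Omega> J" and LY: "L2 \<Omega> Y" and fin: "phi p \<Omega> J < \<infinity>"
    and ineq: "\<And>W. L2 \<Omega> W \<Longrightarrow> phi p \<Omega> W < \<infinity> \<Longrightarrow>
         enn2real (phi p \<Omega> W) - enn2real (phi p \<Omega> J) \<ge> l2inner \<Omega> Y (\<lambda>x. W x - J x)"
    unfolding subdiff_def by auto
  define M where "M = lebesgue_on \<Omega>"
  have ci: "integrable M (\<lambda>x. cnj (Y x) * J x)" unfolding M_def by (rule L2_cinner_integrable[OF \<Omega> LY LJ])
  define a where "a = (\<integral>x. Re (cnj (Y x) * J x) \<partial>M)"
  define b where "b = (\<integral>x. Im (cnj (Y x) * J x) \<partial>M)"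
  have key: "0 \<le> t\<^sup>2 * a + t * b" for t :: real
  proof -
    define c where "c = Complex ((1 - t\<^sup>2) / (1 + t\<^sup>2)) (2 * t / (1 + t\<^sup>2))"
    have tpos: "0 < 1 + t\<^sup>2" by (simp add: add_pos_nonneg)
    have e0: "(1 - t\<^sup>2)\<^sup>2 + (2 * t)\<^sup>2 = (1 + t\<^sup>2)\<^sup>2" by (simp add: power2_eq_square algebra_simps)
    have "((1 - t\<^sup>2) / (1 + t\<^sup>2))\<^sup>2 + (2 * t / (1 + t\<^sup>2))\<^sup>2 = ((1 - t\<^sup>2)\<^sup>2 + (2 * t)\<^sup>2) / (1 + t\<^sup>2)\<^sup>2"
      by (simp add: power_divide add_divide_distrib)
    also have "\<dots> = 1" unfolding e0 using tpos by simp
    finally have c1: "cmod c = 1" unfolding c_def cmod_def by simp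
    have LW: "L2 \<Omega> (\<lambda>x. c * J x)" by (rule Lr_rot[OF c1 LJ])
    have pW: "phi p \<Omega> (\<lambda>x. c * J x) = phi p \<Omega> J" by (rule phi_rot[OF c1])
    have "l2inner \<Omega> Y (\<lambda>x. c * J x - J x) \<le> 0"
      using ineq[OF LW] fin pW by simp
    moreover have "l2inner \<Omega> Y (\<lambda>x. c * J x - J x) = (Re c - 1) * a - Im c * b"
    proof -
      have "l2inner \<Omega> Y (\<lambda>x. c * J x - J x) = (\<integral>x. (Re c - 1) * Re (cnj (Y x) * J x) - Im c * Im (cnj (Y x) * J x) \<partial>M)"
        unfolding l2inner_M[OF \<Omega>] M_def[symmetric]
        by (rule Bochner_Integration.integral_cong) (auto simp: algebra_simps)
      also have "\<dots> = (\<integral>x. (Re c - 1) * Re (cnj (Y x) * J x) \<partial>M) - (\<integral>x. Im c * Im (cnj (Y x) * J x) \<partial>M)"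
        by (rule Bochner_Integration.integral_diff) (intro integrable_mult_right integrable_Re integrable_Im ci)+
      also have "\<dots> = (Re c - 1) * a - Im c * b"
        unfolding a_def b_def by (simp only: integral_mult_right_zero)
      finally show ?thesis .
    qed
    ultimately have "(Re c - 1) * a - Im c * b \<le> 0" by simp
    then have le: "(1 + t\<^sup>2) * ((Re c - 1) * a - Im c * b) \<le> 0"
      using tpos by (simp add: mult_nonneg_nonpos)
    have r1: "Re c - 1 = - 2 * t\<^sup>2 / (1 + t\<^sup>2)" unfolding c_def using tpos by (simp add: field_simps)
    have r2: "Im c = 2 * t / (1 + t\<^sup>2)" unfolding c_def by simp
    have "(1 + t\<^sup>2) * ((Re c - 1) * a - Im c * b) = - 2 * t\<^sup>2 * a - 2 * t * b"
      unfolding r1 r2 by (rule aux_div) (use tpos in simp)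
    then have "- 2 * t\<^sup>2 * a - 2 * t * b \<le> 0" using le by linarith
    then show ?thesis by linarith
  qed
  have "b = 0" by (rule quad_zero[OF key])
  have "(\<integral>x. Re (cnj (Y x) * (\<i> * J x)) \<partial>M) = (\<integral>x. - Im (cnj (Y x) * J x) \<partial>M)"
    by (rule Bochner_Integration.integral_cong) auto
  also have "\<dots> = - b" unfolding b_def by (rule integral_minus)
  finally show ?thesis using \<open>b = 0\<close> unfolding M_def by simp
qed

lemma Lr_zero: "Lr r \<Omega> (\<lambda>x. 0)"
  unfolding Lr_def by simp

lemma W0grad_zero: "W0grad p \<Omega> (\<lambda>x. 0) (\<lambda>x. 0)"
proof -
  have C: "C1c \<Omega> (\<lambda>x. 0) (\<lambda>x v. 0)"
    unfolding C1c_def by (simp add: has_derivative_const)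
  have cg: "cgrad (\<lambda>v. 0) = (0, 0)" unfolding cgrad_def by simp
  show ?thesis unfolding W0grad_def
    by (intro conjI exI[of _ "\<lambda>k x. 0"] exI[of _ "\<lambda>k x v. 0"]) (simp_all add: C cg)
qed

lemma phi_zero: "phi p \<Omega> (\<lambda>x. 0) = 0"
proof -
  have "(INF G\<in>{G. W0grad p \<Omega> (\<lambda>x. 0) G}. ennreal (1/p) * (\<integral>\<^sup>+x\<in>\<Omega>. ennreal (norm (G x) powr p) \<partial>lebesgue))
      \<le> ennreal (1/p) * (\<integral>\<^sup>+x\<in>\<Omega>. ennreal (norm ((\<lambda>x. (0::'a \<times> 'a)) x) powr p) \<partial>lebesgue)"
    by (rule INF_lower) (simp add: W0grad_zero)
  also have "\<dots> = 0" by simp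
  moreover have "L2 \<Omega> (\<lambda>x. 0)" by (rule Lr_zero)
  moreover have "W0 p \<Omega> (\<lambda>x. 0)" unfolding W0_def using W0grad_zero by blast
  ultimately show ?thesis unfolding phi_def by simp
qed

lemma psi_zero: "psi q \<Omega> (\<lambda>x. 0) = 0"
  unfolding psi_def using Lr_zero[of 2 \<Omega>] Lr_zero[of q \<Omega>] by simp

lemma subdiff_nonneg:
  assumes \<Omega>: "\<Omega> \<in> sets lebesgue" and A: "A \<in> subdiff \<Omega> \<Phi> U" and \<Phi>0: "\<Phi> (\<lambda>x. 0) = 0"
  shows "0 \<le> l2inner \<Omega> A U"
proof -
  from A have "enn2real (\<Phi> (\<lambda>x. 0)) - enn2real (\<Phi> U) \<ge> l2inner \<Omega> A (\<lambda>x. 0 - U x)"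
    unfolding subdiff_def using Lr_zero[of 2 \<Omega>] \<Phi>0 by auto
  moreover have "l2inner \<Omega> A (\<lambda>x. 0 - U x) = - l2inner \<Omega> A U"
    unfolding l2inner_M[OF \<Omega>] by (simp del: integral_minus add: integral_minus[symmetric])
  ultimately have "enn2real (\<Phi> U) \<le> l2inner \<Omega> A U" using \<Phi>0 by simp
  then show ?thesis using enn2real_nonneg[of "\<Phi> U"] by linarith
qed

lemma int_le_nn:
  fixes f :: "_ \<Rightarrow> real"
  assumes "integrable M f"
  shows "ennreal (integral\<^sup>L M f) \<le> (\<integral>\<^sup>+x. ennreal (f x) \<partial>M)"
proof -
  have "integral\<^sup>L M f \<le> integral\<^sup>L M (\<lambda>x. max (f x) 0)"
    using assms by (intro integral_mono) auto
  moreover have "ennreal (integral\<^sup>L M (\<lambda>x. max (f x) 0)) = (\<integral>\<^sup>+x. ennreal (max (f x) 0) \<partial>M)"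
    using assms by (intro nn_integral_eq_integral[symmetric]) auto
  moreover have "(\<integral>\<^sup>+x. ennreal (max (f x) 0) \<partial>M) = (\<integral>\<^sup>+x. ennreal (f x) \<partial>M)"
    by (intro nn_integral_cong) (simp add: max_def ennreal_neg)
  ultimately show ?thesis by (metis ennreal_leI)
qed

lemma re_bound: "2 * Re (cnj a * b) \<le> (cmod a)\<^sup>2 + (cmod b)\<^sup>2"
proof -
  have "Re (cnj a * b) \<le> cmod (cnj a * b)" by (rule complex_Re_le_cmod)
  also have "\<dots> = cmod a * cmod b" by (simp add: norm_mult)
  finally show ?thesis using sum_squares_bound[of "cmod a" "cmod b"] by simp
qed

lemma L2_diff:
  assumes \<Omega>: "\<Omega> \<in> sets lebesgue" and f: "L2 \<Omega> f" and g: "L2 \<Omega> g"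
  shows "L2 \<Omega> (\<lambda>x. f x - g x)"
proof -
  have [measurable]: "f \<in> borel_measurable (lebesgue_on \<Omega>)" "g \<in> borel_measurable (lebesgue_on \<Omega>)"
    using f g \<Omega> by (auto simp: L2_iff)
  have "(\<integral>\<^sup>+x. ennreal ((cmod (f x - g x))\<^sup>2) \<partial>lebesgue_on \<Omega>)
     \<le> (\<integral>\<^sup>+x. 2 * ennreal ((cmod (f x))\<^sup>2) + 2 * ennreal ((cmod (g x))\<^sup>2) \<partial>lebesgue_on \<Omega>)"
  proof (rule nn_integral_mono)
    fix x
    have "(cmod (f x - g x))\<^sup>2 \<le> (cmod (f x) + cmod (g x))\<^sup>2"
      by (intro power_mono norm_triangle_ineq4) simp
    also have "\<dots> \<le> 2 * (cmod (f x))\<^sup>2 + 2 * (cmod (g x))\<^sup>2"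
      using sum_squares_bound[of "cmod (f x)" "cmod (g x)"] by (simp add: power2_sum)
    finally have "ennreal ((cmod (f x - g x))\<^sup>2) \<le> ennreal (2 * (cmod (f x))\<^sup>2 + 2 * (cmod (g x))\<^sup>2)"
      by (rule ennreal_leI)
    then show "ennreal ((cmod (f x - g x))\<^sup>2) \<le> 2 * ennreal ((cmod (f x))\<^sup>2) + 2 * ennreal ((cmod (g x))\<^sup>2)"
      by (simp add: ennreal_plus ennreal_mult)
  qed
  also have "\<dots> = 2 * (\<integral>\<^sup>+x. ennreal ((cmod (f x))\<^sup>2) \<partial>lebesgue_on \<Omega>) + 2 * (\<integral>\<^sup>+x. ennreal ((cmod (g x))\<^sup>2) \<partial>lebesgue_on \<Omega>)"
    by (simp add: nn_integral_add nn_integral_cmult)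
  also have "\<dots> < \<infinity>" using f g \<Omega> by (simp add: L2_iff ennreal_mult_less_top)
  finally show ?thesis using \<Omega> by (simp add: L2_iff)
qed

lemma re_bound': "- 2 * Re (cnj a * b) \<le> (cmod a)\<^sup>2 + (cmod b)\<^sup>2"
  using re_bound[of "- a" b] by simp

lemma pointwise_time:
  fixes \<Omega> :: "'a::euclidean_space set"
  assumes \<Omega>s: "\<Omega> \<in> sets lebesgue"
   and A: "A \<in> subdiff \<Omega> \<Phi> U" and \<Phi>0: "\<Phi> (\<lambda>x. 0) = 0"
   and Y: "Y \<in> yosida \<Omega> (phi p \<Omega>) \<nu> U"
   and LU: "L2 \<Omega> U" and LV: "L2 \<Omega> V" and LBU: "L2 \<Omega> BU" and LB0: "L2 \<Omega> B0"
   and Fm: "F \<in> borel_measurable (lebesgue_on \<Omega>)"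
   and eq: "AE x in lebesgue_on \<Omega>. V x + A x + complex_of_real \<alpha> * \<i> * Y x + BU x = F x"
   and lip: "l2norm \<Omega> (\<lambda>x. BU x - B0 x) \<le> LB * l2norm \<Omega> (\<lambda>x. U x - 0)" and LB: "0 \<le> LB"
  shows "ennreal (2 * l2inner \<Omega> V U) \<le> (\<integral>\<^sup>+x\<in>\<Omega>. ennreal ((cmod (F x))\<^sup>2) \<partial>lebesgue)
           + ennreal ((3 + LB\<^sup>2) * (l2norm \<Omega> U)\<^sup>2 + (l2norm \<Omega> B0)\<^sup>2)"
proof -
  define M where "M = lebesgue_on \<Omega>"
  define J where "J = (\<lambda>x. U x - complex_of_real \<nu> * Y x)"
  have YJ: "Y \<in> subdiff \<Omega> (phi p \<Omega>) J" using Y unfolding yosida_def J_def by auto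
  then have LY: "L2 \<Omega> Y" unfolding subdiff_def by auto
  have LA: "L2 \<Omega> A" using A unfolding subdiff_def by auto
  have orth: "(\<integral>x. Re (cnj (Y x) * (\<i> * J x)) \<partial>M) = 0" unfolding M_def by (rule yosida_orth[OF \<Omega>s YJ])
  have ai: "0 \<le> l2inner \<Omega> A U" by (rule subdiff_nonneg[OF \<Omega>s A \<Phi>0])
  have [measurable]: "U \<in> borel_measurable M" "V \<in> borel_measurable M" "BU \<in> borel_measurable M"
     "B0 \<in> borel_measurable M" "A \<in> borel_measurable M" "Y \<in> borel_measurable M" "F \<in> borel_measurable M"
    using LU LV LBU LB0 LA LY Fm \<Omega>s by (auto simp: L2_iff M_def)
  have iV: "integrable M (\<lambda>x. Re (cnj (V x) * U x))" unfolding M_def by (rule L2_inner_integrable[OF \<Omega>s LV LU])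
  have iA: "integrable M (\<lambda>x. Re (cnj (A x) * U x))" unfolding M_def by (rule L2_inner_integrable[OF \<Omega>s LA LU])
  have ciY: "integrable M (\<lambda>x. cnj (Y x) * U x)" unfolding M_def by (rule L2_cinner_integrable[OF \<Omega>s LY LU])
  have iY: "integrable M (\<lambda>x. Re (cnj (complex_of_real \<alpha> * \<i> * Y x) * U x))"
  proof -
    have "integrable M (\<lambda>x. Re (cnj (complex_of_real \<alpha> * \<i>) * (cnj (Y x) * U x)))"
      by (intro integrable_Re integrable_mult_right ciY)
    then show ?thesis by (simp add: mult.assoc)
  qed
  have Yint: "(\<integral>x. Re (cnj (complex_of_real \<alpha> * \<i> * Y x) * U x) \<partial>M) = 0"
  proof -
    have "(\<integral>x. Re (cnj (complex_of_real \<alpha> * \<i> * Y x) * U x) \<partial>M) = (\<integral>x. (- \<alpha>) * Re (cnj (Y x) * (\<i> * J x)) \<partial>M)"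
      unfolding J_def by (rule Bochner_Integration.integral_cong) (auto simp: algebra_simps)
    also have "\<dots> = (- \<alpha>) * (\<integral>x. Re (cnj (Y x) * (\<i> * J x)) \<partial>M)" by (rule integral_mult_right_zero)
    finally show ?thesis using orth by simp
  qed
  define R where "R = (\<lambda>x. 2 * Re (cnj (V x) * U x) + 2 * Re (cnj (A x) * U x) + 2 * Re (cnj (complex_of_real \<alpha> * \<i> * Y x) * U x))"
  have iR: "integrable M R" unfolding R_def using iV iA iY by (intro Bochner_Integration.integrable_add integrable_mult_right)
  have intR: "integral\<^sup>L M R = 2 * l2inner \<Omega> V U + 2 * l2inner \<Omega> A U"
  proof -
    have "integral\<^sup>L M R = (\<integral>x. 2 * Re (cnj (V x) * U x) + 2 * Re (cnj (A x) * U x) \<partial>M) + (\<integral>x. 2 * Re (cnj (complex_of_real \<alpha> * \<i> * Y x) * U x) \<partial>M)"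
      unfolding R_def using iV iA iY by (intro Bochner_Integration.integral_add Bochner_Integration.integrable_add integrable_mult_right)
    also have "(\<integral>x. 2 * Re (cnj (V x) * U x) + 2 * Re (cnj (A x) * U x) \<partial>M) = (\<integral>x. 2 * Re (cnj (V x) * U x) \<partial>M) + (\<integral>x. 2 * Re (cnj (A x) * U x) \<partial>M)"
      using iV iA by (intro Bochner_Integration.integral_add integrable_mult_right)
    also have "(\<integral>x. 2 * Re (cnj (complex_of_real \<alpha> * \<i> * Y x) * U x) \<partial>M) = 0"
      using Yint by (simp only: integral_mult_right_zero)
    finally show ?thesis unfolding l2inner_M[OF \<Omega>s] M_def[symmetric] by (simp only: integral_mult_right_zero)
  qed
  define Qf where "Qf = (\<lambda>x. ennreal ((cmod (F x))\<^sup>2) + 3 * ennreal ((cmod (U x))\<^sup>2) + ennreal ((cmod (BU x - B0 x))\<^sup>2) + ennreal ((cmod (B0 x))\<^sup>2))"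
  have RQ: "AE x in M. ennreal (R x) \<le> Qf x"
    using eq unfolding M_def[symmetric]
  proof eventually_elim
    case (elim x)
    then have Fx: "F x = V x + A x + complex_of_real \<alpha> * \<i> * Y x + BU x" by simp
    have "R x = 2 * Re (cnj (F x) * U x) - 2 * Re (cnj (BU x - B0 x) * U x) - 2 * Re (cnj (B0 x) * U x)"
      unfolding R_def Fx by (simp add: algebra_simps)
    also have "\<dots> \<le> ((cmod (F x))\<^sup>2 + (cmod (U x))\<^sup>2) + ((cmod (BU x - B0 x))\<^sup>2 + (cmod (U x))\<^sup>2) + ((cmod (B0 x))\<^sup>2 + (cmod (U x))\<^sup>2)"
      using re_bound[of "F x" "U x"] re_bound'[of "BU x - B0 x" "U x"] re_bound'[of "B0 x" "U x"] by linarith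
    finally have "ennreal (R x) \<le> ennreal ((cmod (F x))\<^sup>2 + 3 * (cmod (U x))\<^sup>2 + (cmod (BU x - B0 x))\<^sup>2 + (cmod (B0 x))\<^sup>2)"
      by (intro ennreal_leI) simp
    then show ?case unfolding Qf_def by (simp add: ennreal_plus ennreal_mult)
  qed
  have LD: "L2 \<Omega> (\<lambda>x. BU x - B0 x)" by (rule L2_diff[OF \<Omega>s LBU LB0])
  have nU: "(\<integral>\<^sup>+x. ennreal ((cmod (U x))\<^sup>2) \<partial>M) = ennreal ((l2norm \<Omega> U)\<^sup>2)" unfolding M_def by (rule l2norm_nn[OF \<Omega>s LU])
  have nB0: "(\<integral>\<^sup>+x. ennreal ((cmod (B0 x))\<^sup>2) \<partial>M) = ennreal ((l2norm \<Omega> B0)\<^sup>2)" unfolding M_def by (rule l2norm_nn[OF \<Omega>s LB0])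
  have nD: "(\<integral>\<^sup>+x. ennreal ((cmod (BU x - B0 x))\<^sup>2) \<partial>M) = ennreal ((l2norm \<Omega> (\<lambda>x. BU x - B0 x))\<^sup>2)"
    unfolding M_def by (rule l2norm_nn[OF \<Omega>s LD])
  have nF: "(\<integral>\<^sup>+x. ennreal ((cmod (F x))\<^sup>2) \<partial>M) = (\<integral>\<^sup>+x\<in>\<Omega>. ennreal ((cmod (F x))\<^sup>2) \<partial>lebesgue)"
    unfolding M_def using \<Omega>s by (simp add: nn_integral_restrict_space)
  have Dle: "(l2norm \<Omega> (\<lambda>x. BU x - B0 x))\<^sup>2 \<le> LB\<^sup>2 * (l2norm \<Omega> U)\<^sup>2"
  proof -
    have "0 \<le> l2norm \<Omega> (\<lambda>x. BU x - B0 x)" unfolding l2norm_def by simp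
    then have "(l2norm \<Omega> (\<lambda>x. BU x - B0 x))\<^sup>2 \<le> (LB * l2norm \<Omega> U)\<^sup>2"
      using lip by (intro power_mono) auto
    then show ?thesis by (simp add: power_mult_distrib)
  qed
  have "ennreal (2 * l2inner \<Omega> V U) \<le> ennreal (integral\<^sup>L M R)"
    using ai intR by (intro ennreal_leI) simp
  also have "\<dots> \<le> (\<integral>\<^sup>+x. ennreal (R x) \<partial>M)" by (rule int_le_nn[OF iR])
  also have "\<dots> \<le> (\<integral>\<^sup>+x. Qf x \<partial>M)" by (rule nn_integral_mono_AE[OF RQ])
  also have "\<dots> = (\<integral>\<^sup>+x. ennreal ((cmod (F x))\<^sup>2) \<partial>M) + 3 * (\<integral>\<^sup>+x. ennreal ((cmod (U x))\<^sup>2) \<partial>M)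
       + (\<integral>\<^sup>+x. ennreal ((cmod (BU x - B0 x))\<^sup>2) \<partial>M) + (\<integral>\<^sup>+x. ennreal ((cmod (B0 x))\<^sup>2) \<partial>M)"
    unfolding Qf_def by (simp add: nn_integral_add nn_integral_cmult)
  also have "\<dots> \<le> (\<integral>\<^sup>+x\<in>\<Omega>. ennreal ((cmod (F x))\<^sup>2) \<partial>lebesgue) + ennreal ((3 + LB\<^sup>2) * (l2norm \<Omega> U)\<^sup>2 + (l2norm \<Omega> B0)\<^sup>2)"
  proof -
    have "3 * ennreal ((l2norm \<Omega> U)\<^sup>2) + ennreal ((l2norm \<Omega> (\<lambda>x. BU x - B0 x))\<^sup>2) + ennreal ((l2norm \<Omega> B0)\<^sup>2)
        \<le> ennreal ((3 + LB\<^sup>2) * (l2norm \<Omega> U)\<^sup>2 + (l2norm \<Omega> B0)\<^sup>2)"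
    proof -
      have "3 * ennreal ((l2norm \<Omega> U)\<^sup>2) + ennreal ((l2norm \<Omega> (\<lambda>x. BU x - B0 x))\<^sup>2) + ennreal ((l2norm \<Omega> B0)\<^sup>2)
          = ennreal (3 * (l2norm \<Omega> U)\<^sup>2 + (l2norm \<Omega> (\<lambda>x. BU x - B0 x))\<^sup>2 + (l2norm \<Omega> B0)\<^sup>2)"
        by (simp add: ennreal_plus ennreal_mult)
      also have "\<dots> \<le> ennreal ((3 + LB\<^sup>2) * (l2norm \<Omega> U)\<^sup>2 + (l2norm \<Omega> B0)\<^sup>2)"
        using Dle by (intro ennreal_leI) (simp add: algebra_simps)
      finally show ?thesis .
    qed
    then show ?thesis unfolding nU nB0 nD nF by (simp add: add.assoc add_left_mono)
  qed
  finally show ?thesis .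
qed

lemma gronwall:
  fixes g :: "real \<Rightarrow> real" and K k T t :: real
  assumes cont: "continuous_on {0..T} g" and k: "0 \<le> k"
    and bnd: "\<And>t. t \<in> {0..T} \<Longrightarrow> g t \<le> K + k * integral {0..t} g"
    and t: "t \<in> {0..T}"
  shows "g t \<le> K * exp (k * t)"
proof -
  define I where "I u = integral {0..u} g" for u
  define \<Phi> where "\<Phi> u = exp (- k * u) * (K + k * I u)" for u
  have dI: "(I has_real_derivative g x) (at x within {0..T})" if "x \<in> {0..T}" for x
    using integral_has_real_derivative[OF cont that] unfolding I_def .
  have d\<Phi>: "(\<Phi> has_real_derivative (exp (- k * x) * (k * (g x - (K + k * I x))))) (at x within {0..T})"
    if "x \<in> {0..T}" for x
    unfolding \<Phi>_def
    by (rule derivative_eq_intros dI[OF that] refl | simp)+ (simp add: algebra_simps)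
  have "\<Phi> t - \<Phi> 0 \<le> 0"
  proof -
    have "\<exists>x\<in>{0..t}. \<Phi> t - \<Phi> 0 = (*) (exp (- k * x) * (k * (g x - (K + k * I x)))) (t - 0)"
    proof (rule mvt_very_simple)
      show "0 \<le> t" using t by simp
      fix x assume "0 \<le> x" "x \<le> t"
      then have "x \<in> {0..T}" using t by auto
      from DERIV_subset[OF d\<Phi>[OF this], of "{0..t}"] t
      show "(\<Phi> has_derivative (*) (exp (- k * x) * (k * (g x - (K + k * I x))))) (at x within {0..t})"
        by (simp add: has_field_derivative_def)
    qed
    then obtain x where x: "x \<in> {0..t}" and e: "\<Phi> t - \<Phi> 0 = (exp (- k * x) * (k * (g x - (K + k * I x)))) * t"
      by auto
    have "x \<in> {0..T}" using x t by auto
    then have "g x - (K + k * I x) \<le> 0" using bnd unfolding I_def by auto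
    then have "k * (g x - (K + k * I x)) \<le> 0" using k by (simp add: mult_nonneg_nonpos)
    then have "exp (- k * x) * (k * (g x - (K + k * I x))) \<le> 0" by (simp add: mult_nonneg_nonpos)
    then show ?thesis unfolding e using x by (simp add: mult_nonpos_nonneg)
  qed
  moreover have "\<Phi> 0 = K" unfolding \<Phi>_def I_def by simp
  ultimately have "\<Phi> t \<le> K" by simp
  then have "exp (- k * t) * (K + k * I t) \<le> K" unfolding \<Phi>_def .
  then have "K + k * I t \<le> K * exp (k * t)"
    by (simp add: exp_minus field_simps)
  then show ?thesis using bnd[OF t] unfolding I_def by simp
qed

lemma nn_section_meas:
  fixes F :: "real \<Rightarrow> 'a::euclidean_space \<Rightarrow> complex"
  assumes Fm: "(\<lambda>(t,x). F t x) \<in> borel_measurable (lborel \<Otimes>\<^sub>M lborel)" and \<Omega>: "\<Omega> \<in> sets borel"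
  shows "(\<lambda>t. \<integral>\<^sup>+x\<in>\<Omega>. ennreal ((cmod (F t x))\<^sup>2) \<partial>lebesgue) \<in> borel_measurable lborel"
proof -
  have eq: "(\<lambda>t. \<integral>\<^sup>+x\<in>\<Omega>. ennreal ((cmod (F t x))\<^sup>2) \<partial>lebesgue) = (\<lambda>t. \<integral>\<^sup>+x. ennreal ((cmod (F t x))\<^sup>2) * indicator \<Omega> x \<partial>lborel)"
    by (simp add: nn_integral_completion)
  have [measurable]: "\<Omega> \<in> sets lborel" using \<Omega> by simp
  note Fm[measurable]
  show ?thesis unfolding eq by measurable
qed

lemma main_bound:
  fixes \<Omega> :: "'a::euclidean_space set" and U V F :: "real \<Rightarrow> 'a \<Rightarrow> complex"
  assumes bnd: "bounded \<Omega>" and C2: "C2_domain \<Omega>" and T: "T > 0" and LB: "LB \<ge> 0"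
    and FL: "L2L2 T \<Omega> F" and BL2: "\<forall>W. L2 \<Omega> W \<longrightarrow> L2 \<Omega> (B W)"
    and lip: "\<forall>W1 W2. L2 \<Omega> W1 \<and> L2 \<Omega> W2 \<longrightarrow>
          l2norm \<Omega> (\<lambda>x. B W1 x - B W2 x) \<le> LB * l2norm \<Omega> (\<lambda>x. W1 x - W2 x)"
    and U0q: "Lr q \<Omega> U0"
    and sol: "is_solution \<Omega> p q lam kap \<alpha> \<nu> T B F U0 U"
    and t: "t \<in> {0..T}"
  shows "(l2norm \<Omega> (U t))\<^sup>2 \<le> ((l2norm \<Omega> U0)\<^sup>2 + L2L2norm_sq T \<Omega> F + (l2norm \<Omega> (B (\<lambda>x. 0)))\<^sup>2 * T) * exp ((3 + LB\<^sup>2) * T)"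
proof -
  have op: "open \<Omega>" using C2 unfolding C2_domain_def by auto
  then have \<Omega>s: "\<Omega> \<in> sets lebesgue" by auto
  have \<Omega>b: "\<Omega> \<in> sets borel" using op by auto
  have fin: "finite_measure (lebesgue_on \<Omega>)"
    by (rule finite_measure_lebesgue_on[OF bounded_set_imp_lmeasurable[OF bnd \<Omega>s]])
  define M where "M = lebesgue_on \<Omega>"
  from sol obtain V where UL2: "\<forall>t\<in>{0..T}. L2 \<Omega> (U t)" and VL: "L2L2 T \<Omega> V"
    and hyp: "\<forall>t\<in>{0..T}. AE x in lebesgue_on \<Omega>. set_integrable lborel {0..t} (\<lambda>s. V s x) \<and>
            U t x = U0 x + (\<integral>s\<in>{0..t}. V s x \<partial>lborel)"
    and eqAE: "AE t in lborel. t \<in> {0<..<T} \<longrightarrow>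
           (\<exists>A Y. A \<in> subdiff \<Omega> (\<lambda>W. ennreal lam * phi p \<Omega> W + ennreal kap * psi q \<Omega> W) (U t) \<and>
                  Y \<in> yosida \<Omega> (phi p \<Omega>) \<nu> (U t) \<and>
                  (AE x in lebesgue_on \<Omega>.
                     V t x + A x + complex_of_real \<alpha> * \<i> * Y x + B (U t) x = F t x))"
    unfolding is_solution_def by blast
  have Vm[measurable]: "(\<lambda>(t,x). V t x) \<in> borel_measurable (lborel \<Otimes>\<^sub>M lborel)"
    and VL2: "(\<integral>\<^sup>+t\<in>{0..T}. (\<integral>\<^sup>+x\<in>\<Omega>. ennreal ((cmod (V t x))\<^sup>2) \<partial>lebesgue) \<partial>lborel) < \<infinity>"
    using VL unfolding L2L2_def by auto
  have Fm[measurable]: "(\<lambda>(t,x). F t x) \<in> borel_measurable (lborel \<Otimes>\<^sub>M lborel)"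
    and FL2: "(\<integral>\<^sup>+t\<in>{0..T}. (\<integral>\<^sup>+x\<in>\<Omega>. ennreal ((cmod (F t x))\<^sup>2) \<partial>lebesgue) \<partial>lborel) < \<infinity>"
    using FL unfolding L2L2_def by auto
  have idm: "(\<lambda>x. x) \<in> measurable M lborel"
    unfolding M_def by (simp add: measurable_restrict_space1 measurable_completion)
  have secM: "(\<lambda>x. G s x) \<in> borel_measurable M" if "(\<lambda>(t,x). G t x) \<in> borel_measurable (lborel \<Otimes>\<^sub>M lborel)"
    for G :: "real \<Rightarrow> 'a \<Rightarrow> complex" and s
  proof -
    have "(\<lambda>x. G s x) \<in> borel_measurable lborel" using measurable_Pair2[OF that, of s] by simp
    from measurable_compose[OF idm this] show ?thesis by simp
  qed
  have Vsec: "\<And>s. V s \<in> borel_measurable M" using secM[OF Vm] by simp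
  have Fsec: "\<And>s. F s \<in> borel_measurable M" using secM[OF Fm] by simp
  have U0m: "U0 \<in> borel_measurable M" using U0q unfolding Lr_def M_def by simp
  have T0: "0 \<le> T" using T by simp
  have int0: "(\<integral>s\<in>{0..0}. V s x \<partial>lborel) = 0" for x
    unfolding set_lebesgue_integral_def
    by (rule integral_eq_zero_AE, rule eventually_mono[OF AE_lborel_singleton[of 0]]) (simp add: indicator_def)
  have "0 \<in> {0..T}" using T0 by simp
  from bspec[OF hyp this] have "AE x in lebesgue_on \<Omega>. U 0 x = U0 x + (\<integral>s\<in>{0..0}. V s x \<partial>lborel)"
    by (rule eventually_mono) (simp only:)
  then have AE0: "AE x in M. U 0 x = U0 x" unfolding M_def int0 by simp
  have LU0': "L2 \<Omega> (U 0)" using UL2 T0 by auto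
  have U0f: "(\<integral>\<^sup>+x. ennreal ((cmod (U0 x))\<^sup>2) \<partial>M) < \<infinity>"
  proof -
    have "(\<integral>\<^sup>+x. ennreal ((cmod (U0 x))\<^sup>2) \<partial>M) = (\<integral>\<^sup>+x. ennreal ((cmod (U 0 x))\<^sup>2) \<partial>M)"
      using AE0 by (intro nn_integral_cong_AE) auto
    then show ?thesis using LU0' \<Omega>s by (simp add: L2_iff M_def)
  qed
  have LU0: "L2 \<Omega> U0" using U0m U0f \<Omega>s by (simp add: L2_iff M_def)
  have Um: "\<forall>t\<in>{0..T}. U t \<in> borel_measurable (lebesgue_on \<Omega>)" using UL2 \<Omega>s by (auto simp: L2_iff)
  define h where "h = (\<lambda>s. l2inner \<Omega> (V s) (U s))"
  define g where "g = (\<lambda>s. (l2norm \<Omega> (U s))\<^sup>2)"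
  define g0 where "g0 = (l2norm \<Omega> U0)\<^sup>2"
  have en: "set_integrable lborel {0..\<tau>} h \<and> g \<tau> = g0 + 2 * (LINT s:{0..\<tau>}|lborel. h s)" if "\<tau> \<in> {0..T}" for \<tau>
  proof -
    note E = energy[OF \<Omega>s fin Vm VL2 U0m[unfolded M_def] U0f[unfolded M_def] hyp Um, of \<tau>]
    show ?thesis using E that l2norm_sq[OF \<Omega>s LU0] l2norm_sq[OF \<Omega>s, of "U \<tau>"] UL2
      unfolding h_def g_def g0_def by auto
  qed
  have hT: "set_integrable lborel {0..T} h" using en[of T] T0 by auto
  have hint: "h integrable_on {0..T}" by (rule set_borel_integral_eq_integral(1)[OF hT])
  have gI: "g \<tau> = g0 + 2 * integral {0..\<tau>} h" if "\<tau> \<in> {0..T}" for \<tau>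
    using en[OF that] set_borel_integral_eq_integral(2) by auto
  have gcont: "continuous_on {0..T} g"
  proof -
    have "continuous_on {0..T} (\<lambda>\<tau>. g0 + 2 * integral {0..\<tau>} h)"
      by (intro continuous_intros indefinite_integral_continuous_1 hint)
    then show ?thesis by (rule continuous_on_eq) (simp add: gI)
  qed
  have g_nn: "0 \<le> g s" for s unfolding g_def by simp
  define k where "k = 3 + LB\<^sup>2"
  have k0: "0 \<le> k" unfolding k_def by simp
  define b where "b = l2norm \<Omega> (B (\<lambda>x. 0))"
  define Fn where "Fn = (\<lambda>s. \<integral>\<^sup>+x\<in>\<Omega>. ennreal ((cmod (F s x))\<^sup>2) \<partial>lebesgue)"
  define Vn where "Vn = (\<lambda>s. \<integral>\<^sup>+x\<in>\<Omega>. ennreal ((cmod (V s x))\<^sup>2) \<partial>lebesgue)"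
  define FF where "FF = L2L2norm_sq T \<Omega> F"
  have FF0: "0 \<le> FF" unfolding FF_def L2L2norm_sq_def by simp
  have Fnm[measurable]: "Fn \<in> borel_measurable lborel" unfolding Fn_def by (rule nn_section_meas[OF Fm \<Omega>b])
  have Vnm[measurable]: "Vn \<in> borel_measurable lborel" unfolding Vn_def by (rule nn_section_meas[OF Vm \<Omega>b])
  have FFe: "(\<integral>\<^sup>+s. Fn s * indicator {0..T} s \<partial>lborel) = ennreal FF"
    unfolding FF_def L2L2norm_sq_def Fn_def using FL2 by (simp add: less_top)
  have VfinAE: "AE s in lborel. s \<in> {0..T} \<longrightarrow> L2 \<Omega> (V s)"
  proof -
    have "(\<lambda>s. Vn s * indicator {0..T} s) \<in> borel_measurable lborel" by measurable
    moreover have "(\<integral>\<^sup>+s. Vn s * indicator {0..T} s \<partial>lborel) \<noteq> \<infinity>" using VL2 by (simp add: Vn_def)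
    ultimately have "AE s in lborel. Vn s * indicator {0..T} s \<noteq> \<infinity>"
      by (rule nn_integral_PInf_AE)
    then show ?thesis
    proof eventually_elim
      case (elim s)
      show ?case
      proof
        assume s: "s \<in> {0..T}"
        then have "Vn s < \<infinity>" using elim by (simp add: less_top)
        moreover have "Vn s = (\<integral>\<^sup>+x. ennreal ((cmod (V s x))\<^sup>2) \<partial>lebesgue_on \<Omega>)"
          unfolding Vn_def using \<Omega>s by (simp add: nn_integral_restrict_space)
        ultimately show "L2 \<Omega> (V s)" using Vsec[of s] \<Omega>s by (simp add: L2_iff M_def)
      qed
    qed
  qed
  have \<Phi>0: "(\<lambda>W. ennreal lam * phi p \<Omega> W + ennreal kap * psi q \<Omega> W) (\<lambda>x. 0) = 0"
    by (simp add: phi_zero psi_zero)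
  have LZ: "L2 \<Omega> (\<lambda>x. 0)" by (rule Lr_zero)
  have LB0: "L2 \<Omega> (B (\<lambda>x. 0))" using BL2 LZ by blast
  have ptAE: "AE s in lborel. s \<in> {0<..<T} \<longrightarrow> ennreal (2 * h s) \<le> Fn s + ennreal (k * g s + b\<^sup>2)"
    using eqAE VfinAE
  proof eventually_elim
    case (elim s)
    show ?case
    proof
      assume s: "s \<in> {0<..<T}"
      then obtain A Y where A: "A \<in> subdiff \<Omega> (\<lambda>W. ennreal lam * phi p \<Omega> W + ennreal kap * psi q \<Omega> W) (U s)"
        and Y: "Y \<in> yosida \<Omega> (phi p \<Omega>) \<nu> (U s)"
        and eq: "AE x in lebesgue_on \<Omega>. V s x + A x + complex_of_real \<alpha> * \<i> * Y x + B (U s) x = F s x"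
        using elim by auto
      have sT: "s \<in> {0..T}" using s by auto
      have LUs: "L2 \<Omega> (U s)" using UL2 sT by auto
      have LVs: "L2 \<Omega> (V s)" using elim sT by auto
      have LBU: "L2 \<Omega> (B (U s))" using BL2 LUs by blast
      have lips: "l2norm \<Omega> (\<lambda>x. B (U s) x - B (\<lambda>x. 0) x) \<le> LB * l2norm \<Omega> (\<lambda>x. U s x - 0)"
        using lip LUs LZ by blast
      have Fs: "F s \<in> borel_measurable (lebesgue_on \<Omega>)" using Fsec[of s] by (simp add: M_def)
      from pointwise_time[OF \<Omega>s A \<Phi>0 Y LUs LVs LBU LB0 Fs eq lips LB]
      show "ennreal (2 * h s) \<le> Fn s + ennreal (k * g s + b\<^sup>2)"
        unfolding h_def g_def k_def b_def Fn_def .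
    qed
  qed
  have tint: "2 * (LINT s:{0..\<tau>}|lborel. h s) \<le> FF + k * integral {0..\<tau>} g + b\<^sup>2 * \<tau>" if \<tau>: "\<tau> \<in> {0..T}" for \<tau>
  proof -
    have h\<tau>: "set_integrable lborel {0..\<tau>} h" using en[OF \<tau>] by simp
    have gc0: "continuous_on {0..\<tau>} g" using gcont \<tau> by (auto elim: continuous_on_subset)
    have gc: "continuous_on {0..\<tau>} (\<lambda>s. k * g s + b\<^sup>2)" by (intro continuous_intros gc0)
    have gi: "integrable lborel (\<lambda>s. indicator {0..\<tau>} s *\<^sub>R (k * g s + b\<^sup>2))"
      by (rule borel_integrable_compact[OF compact_Icc gc])
    have gm: "(\<lambda>s. indicator {0..\<tau>} s *\<^sub>R (k * g s + b\<^sup>2)) \<in> borel_measurable lborel" using gi by auto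
    have hi: "integrable lborel (\<lambda>s. indicator {0..\<tau>} s * (2 * h s))"
    proof -
      have "integrable lborel (\<lambda>s. 2 * (indicator {0..\<tau>} s *\<^sub>R h s))"
        using h\<tau> unfolding set_integrable_def by (rule integrable_mult_right)
      then show ?thesis by (simp add: mult.left_commute)
    qed
    have "ennreal (2 * (LINT s:{0..\<tau>}|lborel. h s)) = ennreal (\<integral>s. indicator {0..\<tau>} s * (2 * h s) \<partial>lborel)"
    proof -
      have "2 * (LINT s:{0..\<tau>}|lborel. h s) = (\<integral>s. 2 * (indicator {0..\<tau>} s *\<^sub>R h s) \<partial>lborel)"
        unfolding set_lebesgue_integral_def by (rule integral_mult_right_zero[symmetric])
      then show ?thesis by (simp add: mult.left_commute)
    qed
    also have "\<dots> \<le> (\<integral>\<^sup>+s. ennreal (indicator {0..\<tau>} s * (2 * h s)) \<partial>lborel)"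
      by (rule int_le_nn[OF hi])
    also have "\<dots> \<le> (\<integral>\<^sup>+s. Fn s * indicator {0..T} s + ennreal (indicator {0..\<tau>} s *\<^sub>R (k * g s + b\<^sup>2)) \<partial>lborel)"
    proof (rule nn_integral_mono_AE)
      show "AE s in lborel. ennreal (indicator {0..\<tau>} s * (2 * h s)) \<le> Fn s * indicator {0..T} s + ennreal (indicator {0..\<tau>} s *\<^sub>R (k * g s + b\<^sup>2))"
        using ptAE AE_lborel_singleton[of 0] AE_lborel_singleton[of T]
      proof eventually_elim
        case (elim s)
        show ?case
        proof (cases "s \<in> {0..\<tau>}")
          case True
          then have "s \<in> {0<..<T}" using elim \<tau> by auto
          then have "ennreal (2 * h s) \<le> Fn s + ennreal (k * g s + b\<^sup>2)" using elim by auto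
          moreover have "s \<in> {0..T}" using True \<tau> by auto
          ultimately show ?thesis using True by simp
        next
          case False
          then show ?thesis by simp
        qed
      qed
    qed
    also have "\<dots> = (\<integral>\<^sup>+s. Fn s * indicator {0..T} s \<partial>lborel) + (\<integral>\<^sup>+s. ennreal (indicator {0..\<tau>} s *\<^sub>R (k * g s + b\<^sup>2)) \<partial>lborel)"
      by (rule nn_integral_add) (use gm in auto)
    also have "(\<integral>\<^sup>+s. ennreal (indicator {0..\<tau>} s *\<^sub>R (k * g s + b\<^sup>2)) \<partial>lborel) = ennreal (\<integral>s. indicator {0..\<tau>} s *\<^sub>R (k * g s + b\<^sup>2) \<partial>lborel)"
      by (rule nn_integral_eq_integral[OF gi]) (use k0 g_nn in \<open>auto split: split_indicator\<close>)
    also have "(\<integral>s. indicator {0..\<tau>} s *\<^sub>R (k * g s + b\<^sup>2) \<partial>lborel) = integral {0..\<tau>} (\<lambda>s. k * g s + b\<^sup>2)"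
      using set_borel_integral_eq_integral(2)[of "{0..\<tau>}" "\<lambda>s. k * g s + b\<^sup>2"] gi
      unfolding set_integrable_def set_lebesgue_integral_def by simp
    also have "integral {0..\<tau>} (\<lambda>s. k * g s + b\<^sup>2) = k * integral {0..\<tau>} g + b\<^sup>2 * \<tau>"
    proof -
      have gint: "g integrable_on {0..\<tau>}" by (rule integrable_continuous_interval[OF gc0])
      have "integral {0..\<tau>} (\<lambda>s. k * g s + b\<^sup>2) = integral {0..\<tau>} (\<lambda>s. k * g s) + integral {0..\<tau>} (\<lambda>s. b\<^sup>2)"
      proof (rule Henstock_Kurzweil_Integration.integral_add)
        show "(\<lambda>x. k * g x) integrable_on {0..\<tau>}" using integrable_cmul[OF gint, of k] by simp
      qed auto
      then show ?thesis using \<tau> by (simp add: integral_mult[OF gint, symmetric])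
    qed
    finally have le: "ennreal (2 * (LINT s:{0..\<tau>}|lborel. h s)) \<le> ennreal FF + ennreal (k * integral {0..\<tau>} g + b\<^sup>2 * \<tau>)"
      using FFe by simp
    have gI0: "0 \<le> integral {0..\<tau>} g"
      by (rule integral_nonneg[OF integrable_continuous_interval[OF gc0]]) (simp add: g_nn)
    have nn2: "0 \<le> k * integral {0..\<tau>} g + b\<^sup>2 * \<tau>" using k0 gI0 \<tau> by simp
    have "ennreal FF + ennreal (k * integral {0..\<tau>} g + b\<^sup>2 * \<tau>) = ennreal (FF + (k * integral {0..\<tau>} g + b\<^sup>2 * \<tau>))"
      by (rule ennreal_plus[OF FF0 nn2, symmetric])
    with le have "ennreal (2 * (LINT s:{0..\<tau>}|lborel. h s)) \<le> ennreal (FF + (k * integral {0..\<tau>} g + b\<^sup>2 * \<tau>))"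
      by simp
    then have "2 * (LINT s:{0..\<tau>}|lborel. h s) \<le> FF + (k * integral {0..\<tau>} g + b\<^sup>2 * \<tau>)"
      using FF0 nn2 by (subst (asm) ennreal_le_iff) auto
    then show ?thesis by simp
  qed
  define K where "K = g0 + FF + b\<^sup>2 * T"
  have K0: "0 \<le> K" unfolding K_def g0_def using FF0 T0 by simp
  have gb: "g \<tau> \<le> K + k * integral {0..\<tau>} g" if \<tau>: "\<tau> \<in> {0..T}" for \<tau>
  proof -
    have "g \<tau> = g0 + 2 * (LINT s:{0..\<tau>}|lborel. h s)" using en[OF \<tau>] by simp
    also have "\<dots> \<le> g0 + FF + k * integral {0..\<tau>} g + b\<^sup>2 * \<tau>" using tint[OF \<tau>] by simp
    also have "\<dots> \<le> K + k * integral {0..\<tau>} g" unfolding K_def using \<tau> by (simp add: mult_left_mono)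
    finally show ?thesis .
  qed
  have "g t \<le> K * exp (k * t)" by (rule gronwall[OF gcont k0 gb t])
  also have "\<dots> \<le> K * exp (k * T)" using t k0 K0 by (intro mult_left_mono) (auto intro: mult_left_mono)
  finally show ?thesis unfolding g_def K_def g0_def FF_def b_def k_def .
qed

theorem lemma5p2:
  shows "\<exists>C1 :: real \<Rightarrow> real \<Rightarrow> real \<Rightarrow> real \<Rightarrow> real \<Rightarrow> real \<Rightarrow> real \<Rightarrow> real.
    (\<forall>a b c d e f g. C1 a b c d e f g > 0) \<and>
    (\<forall>(\<Omega> :: 'a::euclidean_space set) p q lam kap \<alpha> T F B LB U0 \<nu> U.
       bounded \<Omega> \<and> C2_domain \<Omega> \<and>
       p > max 1 (2 * real DIM('a) / (real DIM('a) + 2)) \<and> q \<ge> 2 \<and>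
       lam > 0 \<and> kap > 0 \<and> \<bar>\<alpha>\<bar> \<le> lam / 2 \<and> T > 0 \<and>
       L2L2 T \<Omega> F \<and>
       LB \<ge> 0 \<and> (\<forall>W. L2 \<Omega> W \<longrightarrow> L2 \<Omega> (B W)) \<and>
       (\<forall>W1 W2. L2 \<Omega> W1 \<and> L2 \<Omega> W2 \<longrightarrow>
          l2norm \<Omega> (\<lambda>x. B W1 x - B W2 x) \<le> LB * l2norm \<Omega> (\<lambda>x. W1 x - W2 x)) \<and>
       W0 p \<Omega> U0 \<and> Lr q \<Omega> U0 \<and> \<nu> > 0 \<and>
       is_solution \<Omega> p q lam kap \<alpha> \<nu> T B F U0 U
       \<longrightarrow> (\<forall>t\<in>{0..T}. (l2norm \<Omega> (U t))\<^sup>2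
              \<le> C1 lam kap LB T (l2norm \<Omega> (B (\<lambda>x. 0))) (l2norm \<Omega> U0) (L2L2norm_sq T \<Omega> F)))"
proof -
  define C where "C = (\<lambda>(a::real) (b::real) (c::real) (d::real) (e::real) (f::real) (g::real).
     (f\<^sup>2 + \<bar>g\<bar> + e\<^sup>2 * \<bar>d\<bar>) * exp ((3 + c\<^sup>2) * \<bar>d\<bar>) + 1)"
  have pos: "\<forall>a b c d e f g. C a b c d e f g > 0"
  proof (intro allI)
    fix a b c d e f g :: real
    have h1: "0 \<le> (f\<^sup>2 + \<bar>g\<bar> + e\<^sup>2 * \<bar>d\<bar>) * exp ((3 + c\<^sup>2) * \<bar>d\<bar>)" by simp
    have h2: "C a b c d e f g = (f\<^sup>2 + \<bar>g\<bar> + e\<^sup>2 * \<bar>d\<bar>) * exp ((3 + c\<^sup>2) * \<bar>d\<bar>) + 1"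
      unfolding C_def by simp
    show "C a b c d e f g > 0" unfolding h2 using h1 by linarith
  qed
  have main: "\<forall>(\<Omega> :: 'a::euclidean_space set) p q lam kap \<alpha> T F B LB U0 \<nu> U.
       bounded \<Omega> \<and> C2_domain \<Omega> \<and>
       p > max 1 (2 * real DIM('a) / (real DIM('a) + 2)) \<and> q \<ge> 2 \<and>
       lam > 0 \<and> kap > 0 \<and> \<bar>\<alpha>\<bar> \<le> lam / 2 \<and> T > 0 \<and>
       L2L2 T \<Omega> F \<and>
       LB \<ge> 0 \<and> (\<forall>W. L2 \<Omega> W \<longrightarrow> L2 \<Omega> (B W)) \<and>
       (\<forall>W1 W2. L2 \<Omega> W1 \<and> L2 \<Omega> W2 \<longrightarrow>
          l2norm \<Omega> (\<lambda>x. B W1 x - B W2 x) \<le> LB * l2norm \<Omega> (\<lambda>x. W1 x - W2 x)) \<and>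
       W0 p \<Omega> U0 \<and> Lr q \<Omega> U0 \<and> \<nu> > 0 \<and>
       is_solution \<Omega> p q lam kap \<alpha> \<nu> T B F U0 U
       \<longrightarrow> (\<forall>t\<in>{0..T}. (l2norm \<Omega> (U t))\<^sup>2
              \<le> C lam kap LB T (l2norm \<Omega> (B (\<lambda>x. 0))) (l2norm \<Omega> U0) (L2L2norm_sq T \<Omega> F))"
  proof (intro allI impI ballI)
    fix \<Omega> :: "'a::euclidean_space set" and p q lam kap \<alpha> T F B LB U0 \<nu> U t
    assume H: "bounded \<Omega> \<and> C2_domain \<Omega> \<and>
       p > max 1 (2 * real DIM('a) / (real DIM('a) + 2)) \<and> q \<ge> 2 \<and>
       lam > 0 \<and> kap > 0 \<and> \<bar>\<alpha>\<bar> \<le> lam / 2 \<and> T > 0 \<and>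
       L2L2 T \<Omega> F \<and>
       LB \<ge> 0 \<and> (\<forall>W. L2 \<Omega> W \<longrightarrow> L2 \<Omega> (B W)) \<and>
       (\<forall>W1 W2. L2 \<Omega> W1 \<and> L2 \<Omega> W2 \<longrightarrow>
          l2norm \<Omega> (\<lambda>x. B W1 x - B W2 x) \<le> LB * l2norm \<Omega> (\<lambda>x. W1 x - W2 x)) \<and>
       W0 p \<Omega> U0 \<and> Lr q \<Omega> U0 \<and> \<nu> > 0 \<and>
       is_solution \<Omega> p q lam kap \<alpha> \<nu> T B F U0 U" and t: "t \<in> {0..T}"
    from H have bnd: "bounded \<Omega>" and C2: "C2_domain \<Omega>" and T: "T > 0" and FL: "L2L2 T \<Omega> F"
      and LB: "LB \<ge> 0" and BL2: "\<forall>W. L2 \<Omega> W \<longrightarrow> L2 \<Omega> (B W)"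
      and lip: "\<forall>W1 W2. L2 \<Omega> W1 \<and> L2 \<Omega> W2 \<longrightarrow>
          l2norm \<Omega> (\<lambda>x. B W1 x - B W2 x) \<le> LB * l2norm \<Omega> (\<lambda>x. W1 x - W2 x)"
      and U0q: "Lr q \<Omega> U0" and sol: "is_solution \<Omega> p q lam kap \<alpha> \<nu> T B F U0 U"
      by auto
    have "(l2norm \<Omega> (U t))\<^sup>2 \<le> ((l2norm \<Omega> U0)\<^sup>2 + L2L2norm_sq T \<Omega> F + (l2norm \<Omega> (B (\<lambda>x. 0)))\<^sup>2 * T) * exp ((3 + LB\<^sup>2) * T)"
      by (rule main_bound[OF bnd C2 T LB FL BL2 lip U0q sol t])
    also have "\<dots> \<le> C lam kap LB T (l2norm \<Omega> (B (\<lambda>x. 0))) (l2norm \<Omega> U0) (L2L2norm_sq T \<Omega> F)"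
    proof -
      have "0 \<le> L2L2norm_sq T \<Omega> F" unfolding L2L2norm_sq_def by simp
      then show ?thesis unfolding C_def using T by simp
    qed
    finally show "(l2norm \<Omega> (U t))\<^sup>2 \<le> C lam kap LB T (l2norm \<Omega> (B (\<lambda>x. 0))) (l2norm \<Omega> U0) (L2L2norm_sq T \<Omega> F)" .
  qed
  show ?thesis by (rule exI[of _ C]) (use pos main in blast)
qed

end
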